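(* Let $L$ be a positive integer, $\epsilon\in(0,1)$, and let $\mathbf a,\mathbf b\in\mathbb R^n$ be nonzero vectors such that for all $i$, $\mathbf a[i]^2/\|\mathbf a\|^2$ and $\mathbf b[i]^2/\|\mathbf b\|^2$ are integer multiples of $1/L$. There is an absolute constant $C$ such that if $m\ge C/\epsilon^2$, then the Weighted MinHash sketches $W_{\mathbf a},W_{\mathbf b}$ computed with sample size $m$, discretization parameter $L$ and a common random seed satisfy, with probability at least $2/3$, $$|\mathcal F(W_{\mathbf a},W_{\mathbf b})-\langle\mathbf a,\mathbf b\rangle|\le\epsilon\max\left(\|\mathbf a_{\mathcal I}\|\|\mathbf b\|,\ \|\mathbf a\|\|\mathbf b_{\mathcal I}\|\right),$$ where $\mathcal I=\{i:\mathbf a[i]\neq0\text{ and }\mathbf b[i]\neq0\}$ and $\mathcal F$ is the Weighted MinHash estimator.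
   Context: $\|\cdot\|$ is the Euclidean norm, $\langle\cdot,\cdot\rangle$ the standard inner product, and $\mathbf a_{\mathcal I}$ is $\mathbf a$ restricted to indices in $\mathcal I$. Fully random hash functions (independent uniform values in $[0,1]$) are assumed. Rounding procedure $\textsc{Round}(\mathbf z,L)$ for a unit vector $\mathbf z\in\mathbb R^n$: set $\tilde{\mathbf z}[i]=\operatorname{sign}(\mathbf z[i])\sqrt{\lfloor \mathbf z[i]^2L\rfloor/L}$ for all $i$; let $i^*=\arg\max_i|\mathbf z[i]|$; set $\delta=1-\|\tilde{\mathbf z}\|^2$ and replace $\tilde{\mathbf z}[i^*]$ by $\operatorname{sign}(\mathbf z[i^*])\sqrt{\tilde{\mathbf z}[i^*]^2+\delta}$; return $\tilde{\mathbf z}$. Weighted MinHash sketch of $\mathbf a$ (sample number $m$, seed $s$, integer $L$): set $\tilde{\mathbf a}=\textsc{Round}(\mathbf a/\|\mathbf a\|,L)$. For each $i\in\{1,\dots,n\}$ let $\bar{\mathbf a}^{(i)}\in\mathbb R^L$ have its first $\tilde{\mathbf a}[i]^2L$ entries equal to $\tilde{\mathbf a}[i]$ and the rest $0$, and let $\bar{\mathbf a}=[\bar{\mathbf a}^{(1)},\dots,\bar{\mathbf a}^{(n)}]\in\mathbb R^{nL}$. For $i=1,\dots,m$, using the seed $s$ select an independent fully random hash function $h^i:\{1,\dots,nL\}\to[0,1]$ (the same functions for all vectors sketched with seed $s$), let $j^*=\arg\min_{j:\bar{\mathbf a}[j]\neq0}h^i(j)$, and set $W^{hash}_{\mathbf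 a}[i]=h^i(j^* )$, $W^{val}_{\mathbf a}[i]=\bar{\mathbf a}[j^*]$. The sketch is $W_{\mathbf a}=\{W^{hash}_{\mathbf a},W^{val}_{\mathbf a},\|\mathbf a\|\}$. Weighted MinHash estimator $\mathcal F(W_{\mathbf a},W_{\mathbf b})$: set $q_i=\min(W^{val}_{\mathbf a}[i]^2,W^{val}_{\mathbf b}[i]^2)$, $\tilde M=\frac1L\left(\frac{m}{\sum_{i=1}^m\min(W^{hash}_{\mathbf a}[i],W^{hash}_{\mathbf b}[i])}-1\right)$, $I=\frac{\tilde M}{m}\sum_{i=1}^m\mathbb 1[W^{hash}_{\mathbf a}[i]=W^{hash}_{\mathbf b}[i]]\frac{W^{val}_{\mathbf a}[i]W^{val}_{\mathbf b}[i]}{q_i}$, and return $\|\mathbf a\|\|\mathbf b\|\cdot I$. *)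

theory Defs
  imports "HOL-Probability.Probability"
begin

text \<open>Vectors in R^n are functions nat => real, indexed by 0..<n (0-based).\<close>

definition vnorm :: "nat \<Rightarrow> (nat \<Rightarrow> real) \<Rightarrow> real" where
  "vnorm n a = sqrt (\<Sum>i<n. (a i)^2)"

definition vinner :: "nat \<Rightarrow> (nat \<Rightarrow> real) \<Rightarrow> (nat \<Rightarrow> real) \<Rightarrow> real" where
  "vinner n a b = (\<Sum>i<n. a i * b i)"

definition restr_norm :: "nat set \<Rightarrow> (nat \<Rightarrow> real) \<Rightarrow> real" where
  "restr_norm I a = sqrt (\<Sum>i\<in>I. (a i)^2)"

definition round_vec :: "nat \<Rightarrow> nat \<Rightarrow> (nat \<Rightarrow> real) \<Rightarrow> nat \<Rightarrow> real" where
  "round_vec n L z = (let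
      zt = (\<lambda>i. sgn (z i) * sqrt (real_of_int \<lfloor>(z i)^2 * real L\<rfloor> / real L));
      istar = (LEAST i. i < n \<and> (\<forall>j<n. \<bar>z j\<bar> \<le> \<bar>z i\<bar>));
      \<delta> = 1 - (\<Sum>i<n. (zt i)^2)
    in (\<lambda>i. if i = istar then sgn (z istar) * sqrt ((zt istar)^2 + \<delta>) else zt i))"

text \<open>Expanded vector in R^{nL}: index j = i*L + k (k < L) belongs to block i;
  the first (at i)^2 * L entries of block i equal zr i, the rest are 0.\<close>
definition expand_vec :: "nat \<Rightarrow> (nat \<Rightarrow> real) \<Rightarrow> nat \<Rightarrow> real" where
  "expand_vec L zr j = (if real (j mod L) < (zr (j div L))^2 * real L then zr (j div L) else 0)"

definition abar :: "nat \<Rightarrow> nat \<Rightarrow> (nat \<Rightarrow> real) \<Rightarrow> nat \<Rightarrow> real" where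
  "abar n L a = expand_vec L (round_vec n L (\<lambda>i. a i / vnorm n a))"

definition abar_supp :: "nat \<Rightarrow> nat \<Rightarrow> (nat \<Rightarrow> real) \<Rightarrow> nat set" where
  "abar_supp n L a = {j. j < n * L \<and> abar n L a j \<noteq> 0}"

text \<open>Hash values: h (i, j) = h^i(j) for sample i < m and j < n*L.\<close>
definition wmh_hash :: "nat \<Rightarrow> nat \<Rightarrow> (nat \<Rightarrow> real) \<Rightarrow> (nat \<times> nat \<Rightarrow> real) \<Rightarrow> nat \<Rightarrow> real" where
  "wmh_hash n L a h i = Min ((\<lambda>j. h (i, j)) ` abar_supp n L a)"

definition wmh_val :: "nat \<Rightarrow> nat \<Rightarrow> (nat \<Rightarrow> real) \<Rightarrow> (nat \<times> nat \<Rightarrow> real) \<Rightarrow> nat \<Rightarrow> real" where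
  "wmh_val n L a h i = abar n L a (ARG_MIN (\<lambda>j. h (i, j)) j. j \<in> abar_supp n L a)"

definition wmh_sketch :: "nat \<Rightarrow> nat \<Rightarrow> (nat \<Rightarrow> real) \<Rightarrow> (nat \<times> nat \<Rightarrow> real)
    \<Rightarrow> (nat \<Rightarrow> real) \<times> (nat \<Rightarrow> real) \<times> real" where
  "wmh_sketch n L a h = (wmh_hash n L a h, wmh_val n L a h, vnorm n a)"

definition wmh_estimate :: "nat \<Rightarrow> nat \<Rightarrow> (nat \<Rightarrow> real) \<times> (nat \<Rightarrow> real) \<times> real
    \<Rightarrow> (nat \<Rightarrow> real) \<times> (nat \<Rightarrow> real) \<times> real \<Rightarrow> real" where
  "wmh_estimate m L Wa Wb = (case Wa of (ha, va, na) \<Rightarrow> case Wb of (hb, vb, nb) \<Rightarrow>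
     (let q = (\<lambda>i. min ((va i)^2) ((vb i)^2));
          Mt = (1 / real L) * (real m / (\<Sum>i<m. min (ha i) (hb i)) - 1);
          I = Mt / real m * (\<Sum>i<m. (if ha i = hb i then 1 else 0) * (va i * vb i / q i))
      in na * nb * I))"

text \<open>The random seed: m independent fully random hash functions
  {0..<n*L} -> [0,1], i.e. i.i.d. uniform values indexed by {0..<m} x {0..<n*L}.\<close>
definition hash_space :: "nat \<Rightarrow> nat \<Rightarrow> nat \<Rightarrow> (nat \<times> nat \<Rightarrow> real) measure" where
  "hash_space m n L = PiM ({0..<m} \<times> {0..<n * L}) (\<lambda>_. uniform_measure lborel {0..1})"

end

theory Submission
  imports Defs
begin

lemma int_pow1m: "((\<lambda>t::real. (1-t)^k) has_integral 1/(real k+1)) {0..1}"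
proof -
  have "((\<lambda>t::real. (1-t)^k) has_integral ((\<lambda>t. -((1-t)^(k+1))/(real k+1)) 1 - (\<lambda>t. -((1-t)^(k+1))/(real k+1)) 0)) {0..1}"
    apply (rule fundamental_theorem_of_calculus)
     apply simp
    apply (subst has_real_derivative_iff_has_vector_derivative[symmetric])
    apply (rule derivative_eq_intros refl | simp)+
    apply (simp add: field_simps)
    done
  then show ?thesis by simp
qed

lemma prob_space_N: "prob_space (uniform_measure lborel {0..1::real})"
  by (rule prob_space_uniform_measure) auto

lemma prod_if01: "finite F \<Longrightarrow> (\<Prod>k\<in>F. (if P k then 1 else 0::ennreal)) = (if \<forall>k\<in>F. P k then 1 else 0)"
  by (induction F rule: finite_induct) auto

lemma emeasure_N_greater:
  assumes "0 \<le> y" "y \<le> 1"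
  shows "emeasure (uniform_measure lborel {0..1::real}) {y<..} = ennreal (1 - y)"
proof -
  have "{0..1::real} \<inter> {y<..} = {y<..1}" using assms by auto
  then show ?thesis using assms by (simp add: emeasure_uniform_measure divide_ennreal_def)
qed

lemma row_moment:
  fixes K :: "'k set" and U :: "'k set"
  assumes K: "finite K" "U \<subseteq> K" "j \<in> U"
    and V: "((\<lambda>t. t^r * (1-t)^(card U - 1)) has_integral V) {0..1}"
  shows "(\<integral>\<^sup>+\<omega>. ennreal (\<omega> j ^ r) * (if \<forall>k\<in>U-{j}. \<omega> j < \<omega> k then 1 else 0)
      \<partial>PiM K (\<lambda>_. uniform_measure lborel {0..1::real})) = ennreal V"
proof -
  define N where "N = uniform_measure lborel {0..1::real}"
  have N: "prob_space N" unfolding N_def by (rule prob_space_N)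
  interpret P: product_prob_space "\<lambda>_::'k. N" K
    by (simp add: product_prob_space_def product_prob_space_axioms_def product_sigma_finite_def N
       prob_space_imp_sigma_finite)
  have sN[measurable_cong]: "sets N = sets borel" unfolding N_def by simp
  have Kj: "K = insert j (K - {j})" using K by auto
  have fin: "finite (K - {j})" using K by auto
  have FU: "finite (U - {j})" using K finite_subset by blast
  have meas: "(\<lambda>\<omega>. ennreal (\<omega> j ^ r) * (if \<forall>k\<in>U-{j}. \<omega> j < \<omega> k then 1 else 0))
      \<in> borel_measurable (PiM (insert j (K - {j})) (\<lambda>_. N))"
    using FU by measurable (use K in auto)
  have "(\<integral>\<^sup>+\<omega>. ennreal (\<omega> j ^ r) * (if \<forall>k\<in>U-{j}. \<omega> j < \<omega> k then 1 else 0) \<partial>PiM K (\<lambda>_. N))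
     = (\<integral>\<^sup>+\<omega>. ennreal (\<omega> j ^ r) * (if \<forall>k\<in>U-{j}. \<omega> j < \<omega> k then 1 else 0) \<partial>PiM (insert j (K - {j})) (\<lambda>_. N))"
    using Kj by simp
  also have "\<dots> = (\<integral>\<^sup>+ y. (\<integral>\<^sup>+ x. ennreal (y ^ r) * (if \<forall>k\<in>U-{j}. y < x k then 1 else 0) \<partial>PiM (K - {j}) (\<lambda>_. N)) \<partial>N)"
    apply (subst P.product_nn_integral_insert_rev[OF fin _ meas])
    apply simp
    apply (rule nn_integral_cong)+
    apply simp
    done
  also have "\<dots> = (\<integral>\<^sup>+ y. ennreal (y ^ r) * emeasure N {y<..} ^ card (U - {j}) \<partial>N)"
  proof (rule nn_integral_cong)
    fix y :: real
    define g where "g k t = (if k \<in> U then indicator {y<..} t else 1::ennreal)" for k t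
    have "\<And>x. (if \<forall>k\<in>U-{j}. y < x k then 1 else 0) = (\<Prod>k\<in>K-{j}. g k (x k))"
    proof -
      fix x :: "'k \<Rightarrow> real"
      have "(\<Prod>k\<in>K-{j}. g k (x k)) = (\<Prod>k\<in>U-{j}. (if y < x k then 1 else 0))"
        unfolding g_def using K fin
        by (intro prod.mono_neutral_cong_right) auto
      also have "\<dots> = (if \<forall>k\<in>U-{j}. y < x k then 1 else 0)"
        using FU by (rule prod_if01)
      finally show "?thesis x" by simp
    qed
    then have "(\<integral>\<^sup>+ x. ennreal (y ^ r) * (if \<forall>k\<in>U-{j}. y < x k then 1 else 0) \<partial>PiM (K - {j}) (\<lambda>_. N))
        = ennreal (y ^ r) * (\<integral>\<^sup>+ x. (\<Prod>k\<in>K-{j}. g k (x k)) \<partial>PiM (K - {j}) (\<lambda>_. N))"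
      apply simp
      apply (rule nn_integral_cmult)
      apply (rule borel_measurable_prod_ennreal)
      unfolding g_def by measurable
    also have "\<dots> = ennreal (y ^ r) * (\<Prod>k\<in>K-{j}. integral\<^sup>N N (g k))"
      apply (subst P.product_nn_integral_prod[OF fin])
      unfolding g_def by measurable
    also have "(\<Prod>k\<in>K-{j}. integral\<^sup>N N (g k)) = (\<Prod>k\<in>U-{j}. emeasure N {y<..})"
    proof (intro prod.mono_neutral_cong_right)
      show "\<forall>i\<in>K - {j} - (U - {j}). integral\<^sup>N N (g i) = 1"
      proof
        fix i assume "i \<in> K - {j} - (U - {j})"
        then have "i \<notin> U" by auto
        then have "g i = (\<lambda>_. 1)" by (auto simp: g_def)
        then show "integral\<^sup>N N (g i) = 1"
          using prob_space.emeasure_space_1[OF N] by simp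
      qed
      show "\<And>x. x \<in> U - {j} \<Longrightarrow> integral\<^sup>N N (g x) = emeasure N {y<..}"
      proof -
        fix x assume "x \<in> U - {j}"
        then have "g x = indicator {y<..}" by (auto simp: g_def fun_eq_iff)
        moreover have "{y<..} \<in> sets N" using sN by simp
        ultimately show "integral\<^sup>N N (g x) = emeasure N {y<..}" by simp
      qed
    qed (use K fin in auto)
    finally show "(\<integral>\<^sup>+ x. ennreal (y ^ r) * (if \<forall>k\<in>U-{j}. y < x k then 1 else 0) \<partial>PiM (K - {j}) (\<lambda>_. N))
      = ennreal (y ^ r) * emeasure N {y<..} ^ card (U - {j})" by simp
  qed
  also have "\<dots> = (\<integral>\<^sup>+ y. ennreal (y ^ r * (1 - y) ^ (card U - 1)) \<partial>N)"
  proof (rule nn_integral_cong_AE)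
    have "AE y in N. y \<in> {0..1}" unfolding N_def by (rule AE_uniform_measureI) auto
    then show "AE y in N. ennreal (y ^ r) * emeasure N {y<..} ^ card (U - {j}) = ennreal (y ^ r * (1 - y) ^ (card U - 1))"
    proof (rule AE_mp, intro AE_I2 impI)
      fix y :: real assume y: "y \<in> {0..1}"
      have "card (U - {j}) = card U - 1" using K FU by (simp add: card_Diff_singleton_if)
      then show "ennreal (y ^ r) * emeasure N {y<..} ^ card (U - {j}) = ennreal (y ^ r * (1 - y) ^ (card U - 1))"
        using y emeasure_N_greater[of y] unfolding N_def[symmetric] by (simp add: ennreal_mult ennreal_power)
    qed
  qed
  also have "\<dots> = (\<integral>\<^sup>+ y. ennreal (y ^ r * (1 - y) ^ (card U - 1)) * indicator {0..1} y \<partial>lborel)"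
    unfolding N_def by (subst nn_integral_uniform_measure) (auto simp: divide_ennreal_def)
  also have "\<dots> = ennreal V"
    by (rule nn_integral_has_integral_lebesgue'[OF _ V]) auto
  finally show ?thesis unfolding N_def .
qed

definition evp :: "nat set \<Rightarrow> nat \<Rightarrow> nat \<Rightarrow> (nat \<times> nat \<Rightarrow> real) \<Rightarrow> bool" where
  "evp U i j \<omega> \<longleftrightarrow> (\<forall>k\<in>U-{j}. \<omega> (i,j) < \<omega> (i,k))"

definition Xr :: "nat set \<Rightarrow> (nat \<Rightarrow> real) \<Rightarrow> nat \<Rightarrow> (nat \<times> nat \<Rightarrow> real) \<Rightarrow> real" where
  "Xr U c i \<omega> = (\<Sum>j\<in>U. if evp U i j \<omega> then c j else 0)"

definition Yr :: "nat set \<Rightarrow> nat \<Rightarrow> (nat \<times> nat \<Rightarrow> real) \<Rightarrow> real" where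
  "Yr U i \<omega> = (\<Sum>j\<in>U. if evp U i j \<omega> then \<omega> (i,j) else 0)"

lemma evp_unique: "evp U i j \<omega> \<Longrightarrow> evp U i j' \<omega> \<Longrightarrow> j \<in> U \<Longrightarrow> j' \<in> U \<Longrightarrow> j = j'"
  unfolding evp_def by (metis DiffI less_asym singletonD)

lemma sum_single:
  assumes "finite U" "\<And>j j'. j \<in> U \<Longrightarrow> j' \<in> U \<Longrightarrow> Q j \<Longrightarrow> Q j' \<Longrightarrow> j = j'"
  shows "(\<Sum>j\<in>U. if Q j then f j else 0) = (if \<exists>j\<in>U. Q j then f (THE j. j \<in> U \<and> Q j) else (0::real))"
proof (cases "\<exists>j\<in>U. Q j")
  case True
  then obtain j0 where j0: "j0 \<in> U" "Q j0" by auto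
  have the: "(THE j. j \<in> U \<and> Q j) = j0" using j0 assms(2) by blast
  have "(\<Sum>j\<in>U. if Q j then f j else 0) = (\<Sum>j\<in>U. if j = j0 then f j else 0)"
    using j0 assms(2) by (intro sum.cong) auto
  also have "\<dots> = f j0" using j0 assms(1) by simp
  finally show ?thesis using True the by simp
qed auto

lemma sum_single_sq:
  assumes "finite U" "\<And>j j'. j \<in> U \<Longrightarrow> j' \<in> U \<Longrightarrow> Q j \<Longrightarrow> Q j' \<Longrightarrow> j = j'"
  shows "(\<Sum>j\<in>U. if Q j then f j else 0)^2 = (\<Sum>j\<in>U. if Q j then (f j)^2 else (0::real))"
  using sum_single[OF assms, where f=f] sum_single[OF assms, where f="\<lambda>j. (f j)^2"] by simp

lemma Xr_sq: "finite U \<Longrightarrow> (Xr U c i \<omega>)^2 = (\<Sum>j\<in>U. if evp U i j \<omega> then (c j)^2 else 0)"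
  unfolding Xr_def by (rule sum_single_sq) (auto intro: evp_unique)

lemma Yr_sq: "finite U \<Longrightarrow> (Yr U i \<omega>)^2 = (\<Sum>j\<in>U. if evp U i j \<omega> then (\<omega> (i,j))^2 else 0)"
  unfolding Yr_def by (rule sum_single_sq) (auto intro: evp_unique)

lemma ind_sum_le1: "finite U \<Longrightarrow> (\<Sum>j\<in>U. if evp U i j \<omega> then 1 else 0) \<le> (1::real)"
proof -
  assume "finite U"
  then have "(\<Sum>j\<in>U. if evp U i j \<omega> then 1 else 0) = (if \<exists>j\<in>U. evp U i j \<omega> then 1 else (0::real))"
    by (subst sum_single) (auto intro: evp_unique)
  then show ?thesis by simp
qed

lemma ind_sum_ex: "finite U \<Longrightarrow> (\<Sum>j\<in>U. if evp U i j \<omega> then 1 else 0) = (1::real) \<Longrightarrow> \<exists>j\<in>U. evp U i j \<omega>"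
  by (rule ccontr) simp

lemma alg1: "(x::real) > 0 \<Longrightarrow> x * (1 / x - 1 / (x + 1)) = 1 / (x + 1)"
  by (simp add: divide_simps)

lemma alg2: "(x::real) > 0 \<Longrightarrow> x * (1 / x - 2 / (x + 1) + 1 / (x + 2)) = 2 / ((x + 1) * (x + 2))"
  by (simp add: divide_simps) (simp add: algebra_simps)

locale hs =
  fixes m W :: nat and U :: "nat set"
  assumes U: "U \<subseteq> {0..<W}" "U \<noteq> {}"
begin

abbreviation "N \<equiv> uniform_measure lborel {0..1::real}"
abbreviation "K \<equiv> {0..<m} \<times> {0..<W}"
definition "P = PiM K (\<lambda>_. N)"
abbreviation "M \<equiv> card U"

lemma finU: "finite U" using U finite_subset by blast
lemma M_pos: "M \<ge> 1" using finU U(2) by (simp add: Suc_le_eq card_gt_0_iff)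

lemma PP: "product_prob_space (\<lambda>_::nat\<times>nat. N)"
  by (simp add: product_prob_space_def product_prob_space_axioms_def product_sigma_finite_def prob_space_N
       prob_space_imp_sigma_finite)

lemma prob_P: "prob_space P"
  unfolding P_def by (rule prob_space_PiM) (rule prob_space_N)

sublocale prob_space P by (rule prob_P)

lemma sN[measurable_cong]: "sets N = sets borel" by simp

lemma sP: "sets P = sets (PiM K (\<lambda>_. N))" unfolding P_def ..

lemma comp_meas: "p \<in> K \<Longrightarrow> (\<lambda>w. w p) \<in> borel_measurable P"
proof -
  assume "p \<in> K"
  then have "(\<lambda>w. w p) \<in> measurable (PiM K (\<lambda>_. N)) N" by (rule measurable_component_singleton)
  moreover have "measurable (PiM K (\<lambda>_. N)) N = borel_measurable (PiM K (\<lambda>_. N))"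
    by (rule measurable_cong_sets) auto
  ultimately show ?thesis unfolding P_def by simp
qed

lemma comp_meas'[measurable]: "i < m \<Longrightarrow> j \<in> U \<Longrightarrow> (\<lambda>w. w (i,j)) \<in> borel_measurable P"
  using U by (intro comp_meas) auto

lemma evp_meas[measurable]: "i < m \<Longrightarrow> j \<in> U \<Longrightarrow> Measurable.pred P (evp U i j)"
  unfolding evp_def using finU by measurable

lemma AE01: "i < m \<Longrightarrow> j \<in> U \<Longrightarrow> AE \<omega> in P. 0 \<le> \<omega> (i,j) \<and> \<omega> (i,j) \<le> 1"
proof -
  assume ij: "i < m" "j \<in> U"
  interpret PPI: product_prob_space "\<lambda>_::nat\<times>nat. N" K by (rule PP)
  have "AE x in N. 0 \<le> x \<and> x \<le> 1" by (rule AE_uniform_measureI) auto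
  then show ?thesis unfolding P_def using ij U by (intro PPI.AE_component) auto
qed

lemma moment:
  assumes ij: "i < m" "j \<in> U"
    and V: "((\<lambda>t. t^r * (1-t)^(M - 1)) has_integral V) {0..1}"
  shows "integral\<^sup>L P (\<lambda>\<omega>. if evp U i j \<omega> then \<omega> (i,j)^r else 0) = V"
proof -
  have V0: "0 \<le> V" by (rule has_integral_nonneg[OF V]) auto
  have "integral\<^sup>L P (\<lambda>\<omega>. if evp U i j \<omega> then \<omega> (i,j)^r else 0)
      = enn2real (\<integral>\<^sup>+\<omega>. ennreal (if evp U i j \<omega> then \<omega> (i,j)^r else 0) \<partial>P)"
    apply (rule integral_eq_nn_integral)
    using ij apply measurable
    using AE01[OF ij] by eventually_elim auto
  also have "(\<integral>\<^sup>+\<omega>. ennreal (if evp U i j \<omega> then \<omega> (i,j)^r else 0) \<partial>P)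
     = (\<integral>\<^sup>+\<omega>. ennreal (\<omega> (i,j) ^ r) * (if \<forall>k\<in>Pair i ` U-{(i,j)}. \<omega> (i,j) < \<omega> k then 1 else 0)
      \<partial>PiM K (\<lambda>_. N))"
    unfolding P_def by (intro nn_integral_cong) (auto simp: evp_def)
  also have "\<dots> = ennreal V"
  proof (rule row_moment)
    show "finite K" by simp
    show "Pair i ` U \<subseteq> K" using U ij by auto
    show "(i, j) \<in> Pair i ` U" using ij by auto
    have "card (Pair i ` U) = M" by (rule card_image) (auto simp: inj_on_def)
    then show "((\<lambda>t. t ^ r * (1 - t) ^ (card (Pair i ` U) - 1)) has_integral V) {0..1}" using V by simp
  qed
  finally show ?thesis using V0 by simp
qed

lemma int_r0: "((\<lambda>t::real. t^0 * (1-t)^(M - 1)) has_integral 1 / real M) {0..1}"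
  using int_pow1m[of "M - 1"] M_pos by (simp add: of_nat_diff)

lemma int_r1: "((\<lambda>t::real. t^1 * (1-t)^(M - 1)) has_integral (1 / real M - 1 / (real M + 1))) {0..1}"
proof -
  have "((\<lambda>t::real. (1-t)^(M-1) - (1-t)^(M-1+1)) has_integral (1/(real (M-1)+1) - 1/(real (M-1+1)+1))) {0..1}"
    by (intro has_integral_diff int_pow1m)
  moreover have "(\<lambda>t::real. (1-t)^(M-1) - (1-t)^(M-1+1)) = (\<lambda>t::real. t^1 * (1-t)^(M - 1))"
    by (auto simp: fun_eq_iff algebra_simps)
  ultimately show ?thesis using M_pos by (simp add: of_nat_diff)
qed

lemma int_r2: "((\<lambda>t::real. t^2 * (1-t)^(M - 1)) has_integral (1 / real M - 2 / (real M + 1) + 1 / (real M + 2))) {0..1}"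
proof -
  have "((\<lambda>t::real. (1-t)^(M-1) - 2 * (1-t)^(M-1+1) + (1-t)^(M-1+2)) has_integral
      (1/(real (M-1)+1) - 2 * (1/(real (M-1+1)+1)) + 1/(real (M-1+2)+1))) {0..1}"
    by (intro has_integral_diff has_integral_add has_integral_mult_right int_pow1m)
  moreover have "(\<lambda>t::real. (1-t)^(M-1) - 2 * (1-t)^(M-1+1) + (1-t)^(M-1+2)) = (\<lambda>t::real. t^2 * (1-t)^(M - 1))"
    by (auto simp: fun_eq_iff algebra_simps power2_eq_square)
  moreover have "real (M-1) + 1 = real M" "real (M-1+1) + 1 = real M + 1" "real (M-1+2) + 1 = real M + 2"
    using M_pos by (auto simp: of_nat_diff)
  moreover have "2 * (1 / (real M + 1)) = 2 / (real M + 1)" by simp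
  ultimately show ?thesis by (simp only:)
qed

lemma prob_ev: "i < m \<Longrightarrow> j \<in> U \<Longrightarrow> integral\<^sup>L P (\<lambda>\<omega>. if evp U i j \<omega> then 1 else 0) = 1 / real M"
proof -
  assume ij: "i < m" "j \<in> U"
  have e: "(\<lambda>\<omega>. if evp U i j \<omega> then \<omega> (i,j)^0 else 0) = (\<lambda>\<omega>. if evp U i j \<omega> then 1 else (0::real))"
    by (rule ext) simp
  show ?thesis using moment[OF ij int_r0] unfolding e .
qed

lemma mom1: "i < m \<Longrightarrow> j \<in> U \<Longrightarrow> integral\<^sup>L P (\<lambda>\<omega>. if evp U i j \<omega> then \<omega> (i,j) else 0) = 1 / real M - 1 / (real M + 1)"
proof -
  assume ij: "i < m" "j \<in> U"
  have e: "(\<lambda>\<omega>. if evp U i j \<omega> then \<omega> (i,j)^1 else 0) = (\<lambda>\<omega>. if evp U i j \<omega> then \<omega> (i,j) else (0::real))"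
    by (rule ext) simp
  show ?thesis using moment[OF ij int_r1] unfolding e .
qed

lemma mom2: "i < m \<Longrightarrow> j \<in> U \<Longrightarrow> integral\<^sup>L P (\<lambda>\<omega>. if evp U i j \<omega> then \<omega> (i,j)^2 else 0) = 1 / real M - 2 / (real M + 1) + 1 / (real M + 2)"
  using moment[OF _ _ int_r2, of i j] by blast

lemma integ_c: "i < m \<Longrightarrow> j \<in> U \<Longrightarrow> integrable P (\<lambda>\<omega>. if evp U i j \<omega> then (a::real) else 0)"
  by (rule integrable_const_bound[where B="\<bar>a\<bar>"]) auto

lemma int_c: "i < m \<Longrightarrow> j \<in> U \<Longrightarrow> integral\<^sup>L P (\<lambda>\<omega>. if evp U i j \<omega> then (a::real) else 0) = a / real M"
proof -
  assume ij: "i < m" "j \<in> U"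
  have "(\<lambda>\<omega>. if evp U i j \<omega> then (a::real) else 0) = (\<lambda>\<omega>. a * (if evp U i j \<omega> then 1 else 0))"
    by auto
  then show ?thesis using prob_ev[OF ij] by simp
qed

lemma integ_Y1: "i < m \<Longrightarrow> j \<in> U \<Longrightarrow> integrable P (\<lambda>\<omega>. if evp U i j \<omega> then \<omega> (i,j) else 0)"
proof -
  assume ij: "i < m" "j \<in> U"
  show ?thesis
    apply (rule integrable_const_bound[where B=1])
    using AE01[OF ij] apply eventually_elim apply auto[1]
    using ij by measurable
qed

lemma integ_Y2: "i < m \<Longrightarrow> j \<in> U \<Longrightarrow> integrable P (\<lambda>\<omega>. if evp U i j \<omega> then \<omega> (i,j)^2 else 0)"
proof -
  assume ij: "i < m" "j \<in> U"
  show ?thesis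
    apply (rule integrable_const_bound[where B=1])
    using AE01[OF ij] apply eventually_elim apply (auto simp: abs_square_le_1)[1]
    using ij by measurable
qed

lemma integ_X: "i < m \<Longrightarrow> integrable P (Xr U c i)"
  unfolding Xr_def by (intro Bochner_Integration.integrable_sum integ_c) auto

lemma integ_X2: "i < m \<Longrightarrow> integrable P (\<lambda>\<omega>. (Xr U c i \<omega>)^2)"
  unfolding Xr_sq[OF finU] by (intro Bochner_Integration.integrable_sum integ_c) auto

lemma integ_Y: "i < m \<Longrightarrow> integrable P (Yr U i)"
  unfolding Yr_def by (intro Bochner_Integration.integrable_sum integ_Y1) auto

lemma integ_Ysq: "i < m \<Longrightarrow> integrable P (\<lambda>\<omega>. (Yr U i \<omega>)^2)"
  unfolding Yr_sq[OF finU] by (intro Bochner_Integration.integrable_sum integ_Y2) auto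

lemma EX: "i < m \<Longrightarrow> integral\<^sup>L P (Xr U c i) = (\<Sum>j\<in>U. c j) / real M"
proof -
  assume i: "i < m"
  have "integral\<^sup>L P (Xr U c i) = (\<Sum>j\<in>U. integral\<^sup>L P (\<lambda>\<omega>. if evp U i j \<omega> then c j else 0))"
    unfolding Xr_def using i by (intro Bochner_Integration.integral_sum integ_c) auto
  also have "\<dots> = (\<Sum>j\<in>U. c j / real M)" using i by (intro sum.cong) (auto simp: int_c)
  finally show ?thesis by (simp add: sum_divide_distrib)
qed

lemma EX2: "i < m \<Longrightarrow> integral\<^sup>L P (\<lambda>\<omega>. (Xr U c i \<omega>)^2) = (\<Sum>j\<in>U. (c j)^2) / real M"
proof -
  assume i: "i < m"
  have "integral\<^sup>L P (\<lambda>\<omega>. (Xr U c i \<omega>)^2) = (\<Sum>j\<in>U. integral\<^sup>L P (\<lambda>\<omega>. if evp U i j \<omega> then (c j)^2 else 0))"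
    unfolding Xr_sq[OF finU] using i by (intro Bochner_Integration.integral_sum integ_c) auto
  also have "\<dots> = (\<Sum>j\<in>U. (c j)^2 / real M)" using i by (intro sum.cong) (auto simp: int_c)
  finally show ?thesis by (simp add: sum_divide_distrib)
qed

lemma EY: "i < m \<Longrightarrow> integral\<^sup>L P (Yr U i) = 1 / (real M + 1)"
proof -
  assume i: "i < m"
  have "integral\<^sup>L P (Yr U i) = (\<Sum>j\<in>U. integral\<^sup>L P (\<lambda>\<omega>. if evp U i j \<omega> then \<omega> (i,j) else 0))"
    unfolding Yr_def using i by (intro Bochner_Integration.integral_sum integ_Y1) auto
  also have "\<dots> = (\<Sum>j\<in>U. 1 / real M - 1 / (real M + 1))" using i by (intro sum.cong) (auto simp: mom1)
  also have "\<dots> = 1 / (real M + 1)"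
  proof -
    have Mp: "real M > 0" using M_pos by simp
    have "(\<Sum>j\<in>U. 1 / real M - 1 / (real M + 1)) = real M * (1 / real M - 1 / (real M + 1))" by simp
    also have "\<dots> = 1 / (real M + 1)" using Mp alg1 by blast
    finally show ?thesis .
  qed
  finally show ?thesis .
qed

lemma EY2: "i < m \<Longrightarrow> integral\<^sup>L P (\<lambda>\<omega>. (Yr U i \<omega>)^2) = 2 / ((real M + 1) * (real M + 2))"
proof -
  assume i: "i < m"
  have "integral\<^sup>L P (\<lambda>\<omega>. (Yr U i \<omega>)^2) = (\<Sum>j\<in>U. integral\<^sup>L P (\<lambda>\<omega>. if evp U i j \<omega> then \<omega> (i,j)^2 else 0))"
    unfolding Yr_sq[OF finU] using i by (intro Bochner_Integration.integral_sum integ_Y2) auto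
  also have "\<dots> = (\<Sum>j\<in>U. 1 / real M - 2 / (real M + 1) + 1 / (real M + 2))" using i by (intro sum.cong) (auto simp: mom2)
  also have "\<dots> = 2 / ((real M + 1) * (real M + 2))"
  proof -
    have Mp: "real M > 0" using M_pos by simp
    have "(\<Sum>j\<in>U. 1 / real M - 2 / (real M + 1) + 1 / (real M + 2)) = real M * (1 / real M - 2 / (real M + 1) + 1 / (real M + 2))" by simp
    also have "\<dots> = 2 / ((real M + 1) * (real M + 2))" using Mp alg2 by blast
    finally show ?thesis .
  qed
  finally show ?thesis .
qed

lemma AE_ex: "i < m \<Longrightarrow> AE \<omega> in P. \<exists>j\<in>U. evp U i j \<omega>"
proof -
  assume i: "i < m"
  define S where "S \<omega> = (\<Sum>j\<in>U. if evp U i j \<omega> then 1 else (0::real))" for \<omega>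
  have iS: "integrable P S" unfolding S_def using i by (intro Bochner_Integration.integrable_sum integ_c) auto
  have "integral\<^sup>L P S = (\<Sum>j\<in>U. 1 / real M)"
    unfolding S_def using i by (subst Bochner_Integration.integral_sum) (auto intro: integ_c simp: int_c)
  also have "\<dots> = 1" using M_pos by simp
  finally have IS: "integral\<^sup>L P S = 1" .
  have "integral\<^sup>L P (\<lambda>\<omega>. 1 - S \<omega>) = 0" using iS IS by (simp add: prob_space)
  moreover have "AE \<omega> in P. 0 \<le> 1 - S \<omega>" using ind_sum_le1[OF finU] by (simp add: S_def)
  moreover have "integrable P (\<lambda>\<omega>. 1 - S \<omega>)" using iS by simp
  ultimately have "AE \<omega> in P. 1 - S \<omega> = 0" using integral_nonneg_eq_0_iff_AE by blast
  then show ?thesis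
  proof eventually_elim
    case (elim \<omega>) then show ?case using ind_sum_ex[OF finU] unfolding S_def by simp
  qed
qed

end

lemma (in prob_space) var_sum:
  fixes Z :: "'i \<Rightarrow> 'a \<Rightarrow> real"
  assumes I: "finite I" and ind: "indep_vars (\<lambda>_. borel) Z I"
    and int1: "\<And>i. i \<in> I \<Longrightarrow> integrable M (Z i)"
    and int2: "\<And>i. i \<in> I \<Longrightarrow> integrable M (\<lambda>\<omega>. (Z i \<omega>)^2)"
    and E1: "\<And>i. i \<in> I \<Longrightarrow> expectation (Z i) = \<mu>"
    and E2: "\<And>i. i \<in> I \<Longrightarrow> expectation (\<lambda>\<omega>. (Z i \<omega>)^2) = s"
  shows "integrable M (\<lambda>\<omega>. (\<Sum>i\<in>I. Z i \<omega> - \<mu>)^2) \<and>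
    expectation (\<lambda>\<omega>. (\<Sum>i\<in>I. Z i \<omega> - \<mu>)^2) = real (card I) * (s - \<mu>^2)"
proof -
  have prodint: "integrable M (\<lambda>\<omega>. Z i \<omega> * Z k \<omega>)" if "i \<in> I" "k \<in> I" for i k
  proof (cases "i = k")
    case True then show ?thesis using int2[OF that(1)] by (simp add: power2_eq_square)
  next
    case False
    have "indep_vars (\<lambda>_. borel) Z {i,k}" by (rule indep_vars_subset[OF ind]) (use that in auto)
    then have "integrable M (\<lambda>\<omega>. \<Prod>l\<in>{i,k}. Z l \<omega>)"
      using that int1 by (intro indep_vars_integrable) auto
    then show ?thesis using False by simp
  qed
  have prodE: "expectation (\<lambda>\<omega>. Z i \<omega> * Z k \<omega>) = \<mu> * \<mu>" if "i \<in> I" "k \<in> I" "i \<noteq> k" for i k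
  proof -
    have "indep_vars (\<lambda>_. borel) Z {i,k}" by (rule indep_vars_subset[OF ind]) (use that in auto)
    then have "expectation (\<lambda>\<omega>. \<Prod>l\<in>{i,k}. Z l \<omega>) = (\<Prod>l\<in>{i,k}. expectation (Z l))"
      using that int1 by (intro indep_vars_lebesgue_integral) auto
    then show ?thesis using that E1 by simp
  qed
  have dint: "integrable M (\<lambda>\<omega>. (Z i \<omega> - \<mu>) * (Z k \<omega> - \<mu>))" if "i \<in> I" "k \<in> I" for i k
  proof -
    have "(\<lambda>\<omega>. (Z i \<omega> - \<mu>) * (Z k \<omega> - \<mu>)) = (\<lambda>\<omega>. Z i \<omega> * Z k \<omega> - \<mu> * Z i \<omega> - \<mu> * Z k \<omega> + \<mu> * \<mu>)"
      by (auto simp: algebra_simps)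
    then show ?thesis using prodint[OF that] int1[OF that(1)] int1[OF that(2)] by simp
  qed
  have dE: "expectation (\<lambda>\<omega>. (Z i \<omega> - \<mu>) * (Z k \<omega> - \<mu>)) = (if i = k then s - \<mu>^2 else 0)"
    if "i \<in> I" "k \<in> I" for i k
  proof -
    have eq: "(\<lambda>\<omega>. (Z i \<omega> - \<mu>) * (Z k \<omega> - \<mu>)) = (\<lambda>\<omega>. Z i \<omega> * Z k \<omega> - \<mu> * Z i \<omega> - \<mu> * Z k \<omega> + \<mu> * \<mu>)"
      by (auto simp: algebra_simps)
    have "expectation (\<lambda>\<omega>. (Z i \<omega> - \<mu>) * (Z k \<omega> - \<mu>))
       = expectation (\<lambda>\<omega>. Z i \<omega> * Z k \<omega>) - \<mu> * expectation (Z i) - \<mu> * expectation (Z k) + \<mu> * \<mu>"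
      unfolding eq using prodint[OF that] int1[OF that(1)] int1[OF that(2)] by (simp add: prob_space)
    also have "\<dots> = (if i = k then s - \<mu>^2 else 0)"
    proof (cases "i = k")
      case True
      then show ?thesis using E2[OF that(1)] E1[OF that(1)] by (simp add: power2_eq_square)
    next
      case False
      then show ?thesis using prodE[OF that False] E1 that by simp
    qed
    finally show ?thesis .
  qed
  have sq: "(\<Sum>i\<in>I. Z i \<omega> - \<mu>)^2 = (\<Sum>i\<in>I. \<Sum>k\<in>I. (Z i \<omega> - \<mu>) * (Z k \<omega> - \<mu>))" for \<omega>
    by (simp add: power2_eq_square sum_product)
  have "expectation (\<lambda>\<omega>. (\<Sum>i\<in>I. Z i \<omega> - \<mu>)^2) = (\<Sum>i\<in>I. \<Sum>k\<in>I. expectation (\<lambda>\<omega>. (Z i \<omega> - \<mu>) * (Z k \<omega> - \<mu>)))"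
    unfolding sq
    apply (subst Bochner_Integration.integral_sum)
     apply (rule Bochner_Integration.integrable_sum, erule dint, assumption)
    apply (rule sum.cong, rule refl)
    apply (subst Bochner_Integration.integral_sum)
     apply (erule dint, assumption)
    apply (rule refl)
    done
  also have "\<dots> = (\<Sum>i\<in>I. \<Sum>k\<in>I. (if i = k then s - \<mu>^2 else 0))"
    by (intro sum.cong refl) (simp add: dE)
  also have "\<dots> = real (card I) * (s - \<mu>^2)" using I by simp
  finally have "expectation (\<lambda>\<omega>. (\<Sum>i\<in>I. Z i \<omega> - \<mu>)^2) = real (card I) * (s - \<mu>^2)" .
  moreover have "integrable M (\<lambda>\<omega>. (\<Sum>i\<in>I. Z i \<omega> - \<mu>)^2)"
    unfolding sq by (intro Bochner_Integration.integrable_sum dint)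
  ultimately show ?thesis by simp
qed

lemma (in prob_space) cheb_mean:
  fixes Z :: "'i \<Rightarrow> 'a \<Rightarrow> real"
  assumes I: "finite I" "I \<noteq> {}" and ind: "indep_vars (\<lambda>_. borel) Z I"
    and int1: "\<And>i. i \<in> I \<Longrightarrow> integrable M (Z i)"
    and int2: "\<And>i. i \<in> I \<Longrightarrow> integrable M (\<lambda>\<omega>. (Z i \<omega>)^2)"
    and E1: "\<And>i. i \<in> I \<Longrightarrow> expectation (Z i) = \<mu>"
    and E2: "\<And>i. i \<in> I \<Longrightarrow> expectation (\<lambda>\<omega>. (Z i \<omega>)^2) = s"
    and t: "t > 0"
  shows "prob {\<omega>\<in>space M. \<bar>(\<Sum>i\<in>I. Z i \<omega>) / real (card I) - \<mu>\<bar> \<ge> t} \<le> (s - \<mu>^2) / (real (card I) * t^2)"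
proof -
  define n where "n = real (card I)"
  have n: "n > 0" using I by (simp add: n_def card_gt_0_iff)
  note V = var_sum[OF I(1) ind int1 int2 E1 E2]
  have rvZ: "random_variable borel (Z i)" if "i \<in> I" for i using int1[OF that] by simp
  have set_eq: "{\<omega>\<in>space M. \<bar>(\<Sum>i\<in>I. Z i \<omega>) / n - \<mu>\<bar> \<ge> t}
      = {\<omega>\<in>space M. (\<Sum>i\<in>I. Z i \<omega> - \<mu>)^2 \<ge> (n * t)^2}"
  proof -
    have "\<bar>(\<Sum>i\<in>I. Z i \<omega>) / n - \<mu>\<bar> \<ge> t \<longleftrightarrow> (\<Sum>i\<in>I. Z i \<omega> - \<mu>)^2 \<ge> (n * t)^2" for \<omega>
    proof -
      have s1: "(\<Sum>i\<in>I. Z i \<omega> - \<mu>) = (\<Sum>i\<in>I. Z i \<omega>) - n * \<mu>"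
        by (simp add: sum_subtractf n_def)
      have e: "(\<Sum>i\<in>I. Z i \<omega>) / n - \<mu> = (\<Sum>i\<in>I. Z i \<omega> - \<mu>) / n"
        unfolding s1 using n by (simp add: diff_divide_distrib)
      have "\<bar>(\<Sum>i\<in>I. Z i \<omega> - \<mu>) / n\<bar> \<ge> t \<longleftrightarrow> \<bar>\<Sum>i\<in>I. Z i \<omega> - \<mu>\<bar> \<ge> t * n"
        using n by (simp add: abs_divide pos_le_divide_eq)
      also have "\<dots> \<longleftrightarrow> \<bar>\<Sum>i\<in>I. Z i \<omega> - \<mu>\<bar> \<ge> \<bar>n * t\<bar>"
        using n t by (simp add: mult.commute)
      also have "\<dots> \<longleftrightarrow> (\<Sum>i\<in>I. Z i \<omega> - \<mu>)^2 \<ge> (n * t)^2"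
        by (rule abs_le_square_iff)
      finally show ?thesis using e by simp
    qed
    then show ?thesis by blast
  qed
  have "prob {\<omega>\<in>space M. (\<Sum>i\<in>I. Z i \<omega> - \<mu>)^2 \<ge> (n * t)^2}
      \<le> expectation (\<lambda>\<omega>. (\<Sum>i\<in>I. Z i \<omega> - \<mu>)^2) / (n * t)^2"
    by (rule integral_Markov_inequality_measure[where A="space M"]) (use V n t in auto)
  also have "\<dots> = n * (s - \<mu>^2) / (n * t)^2" using V by (simp add: n_def)
  also have "\<dots> = (s - \<mu>^2) / (n * t^2)" using n by (simp add: power_mult_distrib power2_eq_square)
  finally show ?thesis using set_eq by (simp add: n_def)
qed

context hs begin

lemma comp_measJ: "p \<in> J \<Longrightarrow> (\<lambda>w. w p) \<in> borel_measurable (PiM J (\<lambda>_. N))"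
proof -
  assume "p \<in> J"
  then have "(\<lambda>w. w p) \<in> measurable (PiM J (\<lambda>_. N)) N" by (rule measurable_component_singleton)
  moreover have "measurable (PiM J (\<lambda>_. N)) N = borel_measurable (PiM J (\<lambda>_. N))"
    by (rule measurable_cong_sets) auto
  ultimately show ?thesis by simp
qed

lemma evp_restr: "j \<in> U \<Longrightarrow> evp U i j (restrict \<omega> ({i}\<times>{0..<W})) = evp U i j \<omega>"
proof -
  assume j: "j \<in> U"
  have r: "\<forall>k\<in>U. restrict \<omega> ({i}\<times>{0..<W}) (i,k) = \<omega> (i,k)" using U by auto
  show ?thesis unfolding evp_def using r j by auto
qed

lemma Xr_meas[measurable]: "Xr U c i \<in> borel_measurable (PiM ({i}\<times>{0..<W}) (\<lambda>_. N))"
proof -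
  have [measurable]: "j \<in> U \<Longrightarrow> (\<lambda>w. w (i,j)) \<in> borel_measurable (PiM ({i}\<times>{0..<W}) (\<lambda>_. N))" for j
    using U by (intro comp_measJ) auto
  show ?thesis unfolding Xr_def evp_def using finU by measurable
qed

lemma Yr_meas[measurable]: "Yr U i \<in> borel_measurable (PiM ({i}\<times>{0..<W}) (\<lambda>_. N))"
proof -
  have [measurable]: "j \<in> U \<Longrightarrow> (\<lambda>w. w (i,j)) \<in> borel_measurable (PiM ({i}\<times>{0..<W}) (\<lambda>_. N))" for j
    using U by (intro comp_measJ) auto
  show ?thesis unfolding Yr_def evp_def using finU by measurable
qed

lemma Xr_restr: "Xr U c i (restrict \<omega> ({i}\<times>{0..<W})) = Xr U c i \<omega>"
  unfolding Xr_def by (intro sum.cong refl) (simp add: evp_restr)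

lemma Yr_restr: "Yr U i (restrict \<omega> ({i}\<times>{0..<W})) = Yr U i \<omega>"
  unfolding Yr_def using U by (intro sum.cong refl) (auto simp add: evp_restr)


lemma indep_coords:
  assumes "K \<noteq> {}"
  shows "indep_vars (\<lambda>_. N) (\<lambda>p \<omega>. \<omega> p) K"
proof -
  interpret PPI: product_prob_space "\<lambda>_::nat\<times>nat. N" K by (rule PP)
  have rv: "random_variable N (\<lambda>\<omega>. \<omega> p)" for p
  proof (cases "p \<in> K")
    case True
    then show ?thesis unfolding P_def by (rule measurable_component_singleton)
  next
    case False
    have "\<And>\<omega>. \<omega> \<in> space P \<Longrightarrow> \<omega> p = undefined"
      using False by (cases p) (auto simp: P_def space_PiM PiE_def extensional_def)
    then have "(\<lambda>\<omega>. \<omega> p) \<in> measurable P N \<longleftrightarrow> (\<lambda>\<omega>. undefined) \<in> measurable P N"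
      by (rule measurable_cong)
    then show ?thesis by simp
  qed
  have "distr P (PiM K (\<lambda>_. N)) (\<lambda>x. \<lambda>p\<in>K. x p) = distr P P (\<lambda>x. x)"
    by (rule distr_cong) (auto simp: P_def space_PiM)
  also have "\<dots> = P" by simp
  also have "\<dots> = PiM K (\<lambda>p. distr P N (\<lambda>\<omega>. \<omega> p))"
    unfolding P_def by (rule PiM_cong) (auto simp: PPI.PiM_component)
  finally show ?thesis
    by (subst indep_vars_iff_distr_eq_PiM[OF assms rv]) simp
qed

lemma W_pos: "W \<ge> 1"
proof -
  obtain j where "j \<in> U" using U by auto
  then have "j < W" using U by auto
  then show ?thesis by simp
qed

lemma indep_rows:
  assumes m: "m \<ge> 1"
    and F: "\<And>i. i < m \<Longrightarrow> F i \<in> borel_measurable (PiM ({i}\<times>{0..<W}) (\<lambda>_. N))"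
    and Fr: "\<And>i \<omega>. i < m \<Longrightarrow> F i (restrict \<omega> ({i}\<times>{0..<W})) = F i \<omega>"
  shows "indep_vars (\<lambda>_. borel) F {0..<m}"
proof -
  have "K \<noteq> {}" using m W_pos by auto
  then have ind: "indep_vars (\<lambda>_. N) (\<lambda>p \<omega>. \<omega> p) K" by (rule indep_coords)
  have "indep_vars (\<lambda>i. PiM ({i}\<times>{0..<W}) (\<lambda>_. N)) (\<lambda>i \<omega>. restrict (\<lambda>p. \<omega> p) ({i}\<times>{0..<W})) {0..<m}"
    by (rule indep_vars_restrict[OF ind]) (auto simp: disjoint_family_on_def)
  then have "indep_vars (\<lambda>_. borel) (\<lambda>i \<omega>. F i (restrict (\<lambda>p. \<omega> p) ({i}\<times>{0..<W}))) {0..<m}"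
    by (rule indep_vars_compose2) (use F in auto)
  then show ?thesis
    by (subst (asm) indep_vars_cong[OF refl _ refl, where Y=F]) (auto simp: Fr fun_eq_iff)
qed

end

lemma block_sum: "(\<Sum>j<n*L. f j) = (\<Sum>i<n. \<Sum>k<L. f (i*L+k))" for n L :: nat
proof (induction n)
  case 0 then show ?case by simp
next
  case (Suc n)
  have "(\<Sum>j<Suc n*L. f j) = (\<Sum>j<n*L. f j) + (\<Sum>j\<in>{n*L..<n*L+L}. f j)"
    by (simp add: sum.atLeastLessThan_concat[symmetric] lessThan_atLeast0 add.commute)
  also have "(\<Sum>j\<in>{n*L..<n*L+L}. f j) = (\<Sum>k<L. f (n*L+k))"
  proof -
    have "(\<Sum>j\<in>{0 + n*L..<L + n*L}. f j) = (\<Sum>k\<in>{0..<L}. f (k + n*L))"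
      by (rule sum.shift_bounds_nat_ivl)
    then show ?thesis by (simp add: lessThan_atLeast0 add.commute)
  qed
  finally show ?case using Suc by simp
qed

locale vec =
  fixes n L :: nat and a :: "nat \<Rightarrow> real"
  assumes L: "L > 0" and anz: "\<exists>i<n. a i \<noteq> 0"
    and aq: "\<forall>i<n. \<exists>k::nat. (a i)^2 / (vnorm n a)^2 = real k / real L"
begin

definition "\<alpha> i = a i / vnorm n a"
definition "kk i = nat \<lfloor>(\<alpha> i)^2 * real L\<rfloor>"

lemma sumsq_pos: "(\<Sum>i<n. (a i)^2) > 0"
proof -
  obtain i where i: "i < n" "a i \<noteq> 0" using anz by auto
  have "(a i)^2 \<le> (\<Sum>i<n. (a i)^2)" using i by (intro member_le_sum) auto
  moreover have "(a i)^2 > 0" using i by simp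
  ultimately show ?thesis by linarith
qed

lemma nrm_pos: "vnorm n a > 0" unfolding vnorm_def using sumsq_pos by simp

lemma nrm_sq: "(vnorm n a)^2 = (\<Sum>i<n. (a i)^2)"
  unfolding vnorm_def using sumsq_pos by simp

lemma alpha_sq: "(\<alpha> i)^2 = (a i)^2 / (vnorm n a)^2" unfolding \<alpha>_def by (simp add: power_divide)

lemma sum_alpha_sq: "(\<Sum>i<n. (\<alpha> i)^2) = 1"
  unfolding alpha_sq using sumsq_pos by (simp add: sum_divide_distrib[symmetric] nrm_sq)

lemma alpha_sq_le1: "i < n \<Longrightarrow> (\<alpha> i)^2 \<le> 1"
  using member_le_sum[of i "{..<n}" "\<lambda>i. (\<alpha> i)^2"] sum_alpha_sq by simp

lemma kk_eq: "i < n \<Longrightarrow> real (kk i) = (\<alpha> i)^2 * real L"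
proof -
  assume i: "i < n"
  obtain k :: nat where k: "(a i)^2 / (vnorm n a)^2 = real k / real L" using aq i by auto
  have "(\<alpha> i)^2 * real L = real k" using k L by (simp add: alpha_sq)
  then show ?thesis unfolding kk_def by simp
qed

lemma kk_le: "i < n \<Longrightarrow> kk i \<le> L"
proof -
  assume i: "i < n"
  have "real (kk i) \<le> real L" using kk_eq[OF i] alpha_sq_le1[OF i] L
    by (simp add: mult_le_cancel_right1)
  then show ?thesis by simp
qed

lemma kk_pos_iff: "i < n \<Longrightarrow> kk i > 0 \<longleftrightarrow> \<alpha> i \<noteq> 0"
proof -
  assume i: "i < n"
  have "real (kk i) > 0 \<longleftrightarrow> \<alpha> i \<noteq> 0" using kk_eq[OF i] L by (simp add: zero_less_mult_iff)
  then show ?thesis by simp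
qed

lemma round_id: "i < n \<Longrightarrow> round_vec n L \<alpha> i = \<alpha> i"
proof -
  assume i: "i < n"
  define zt where "zt = (\<lambda>i. sgn (\<alpha> i) * sqrt (real_of_int \<lfloor>(\<alpha> i)^2 * real L\<rfloor> / real L))"
  have zt: "zt i = \<alpha> i" if "i < n" for i
  proof -
    have e: "(\<alpha> i)^2 * real L = real (kk i)" using kk_eq[OF that] by simp
    have f: "real_of_int \<lfloor>(\<alpha> i)^2 * real L\<rfloor> = (\<alpha> i)^2 * real L"
      by (simp only: e floor_of_nat of_int_of_nat_eq)
    have "real_of_int \<lfloor>(\<alpha> i)^2 * real L\<rfloor> / real L = (\<alpha> i)^2 * real L / real L"
      by (simp only: f)
    also have "\<dots> = (\<alpha> i)^2" using L by simp
    finally have "real_of_int \<lfloor>(\<alpha> i)^2 * real L\<rfloor> / real L = (\<alpha> i)^2" .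
    then show ?thesis unfolding zt_def by (simp add: sgn_mult_abs)
  qed
  have \<delta>: "1 - (\<Sum>i<n. (zt i)^2) = 0" using zt sum_alpha_sq by simp
  show ?thesis
    unfolding round_vec_def Let_def zt_def[symmetric] \<delta>
    using zt[OF i] by (auto simp: sgn_mult_abs)
qed

lemma abar_eq: "j < n * L \<Longrightarrow> abar n L a j = (if j mod L < kk (j div L) then \<alpha> (j div L) else 0)"
proof -
  assume j: "j < n * L"
  have jd: "j div L < n" using j L by (simp add: div_less_iff_less_mult)
  have "abar n L a j = expand_vec L (round_vec n L \<alpha>) j" unfolding abar_def \<alpha>_def[abs_def] ..
  also have "\<dots> = (if real (j mod L) < (\<alpha> (j div L))^2 * real L then \<alpha> (j div L) else 0)"
    unfolding expand_vec_def round_id[OF jd] ..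
  finally show ?thesis using kk_eq[OF jd] by simp
qed

lemma supp_eq: "abar_supp n L a = {j. j < n * L \<and> j mod L < kk (j div L)}"
proof -
  have "abar n L a j \<noteq> 0 \<longleftrightarrow> j mod L < kk (j div L)" if "j < n * L" for j
  proof -
    have jd: "j div L < n" using that L by (simp add: div_less_iff_less_mult)
    show ?thesis unfolding abar_eq[OF that] using kk_pos_iff[OF jd] by auto
  qed
  then show ?thesis unfolding abar_supp_def by auto
qed

lemma supp_ne: "abar_supp n L a \<noteq> {}"
proof -
  obtain i where i: "i < n" "a i \<noteq> 0" using anz by auto
  then have "\<alpha> i \<noteq> 0" using nrm_pos by (simp add: \<alpha>_def)
  then have "kk i > 0" using kk_pos_iff[OF i(1)] by simp
  moreover have "i * L < n * L" using i L by simp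
  ultimately have "i * L \<in> abar_supp n L a" unfolding supp_eq using L by simp
  then show ?thesis by auto
qed

lemma supp_sub: "abar_supp n L a \<subseteq> {0..<n*L}" unfolding abar_supp_def by auto

end

lemma card_as_sum: "S \<subseteq> {..<N} \<Longrightarrow> real (card S) = (\<Sum>j<N. if j \<in> S then 1 else 0)" for N :: nat
proof -
  assume S: "S \<subseteq> {..<N}"
  have "(\<Sum>j\<in>{..<N} \<inter> S. (1::real)) = (\<Sum>j<N. if j \<in> S then 1 else 0)"
    by (rule sum.inter_restrict) simp
  then have "(\<Sum>j<N. if j \<in> S then (1::real) else 0) = (\<Sum>j\<in>{..<N} \<inter> S. 1)" by simp
  also have "{..<N} \<inter> S = S" using S by auto
  finally show ?thesis by simp
qed

lemma sum_lt: "m' \<le> L \<Longrightarrow> (\<Sum>k<L. if k < m' then g else 0) = real m' * (g::real)"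
proof -
  assume m': "m' \<le> L"
  have "(\<Sum>k\<in>{..<L} \<inter> {..<m'}. g) = (\<Sum>k<L. if k < m' then g else 0)"
    by (subst sum.inter_restrict) auto
  then have "(\<Sum>k<L. if k < m' then g else 0) = (\<Sum>k\<in>{..<L} \<inter> {..<m'}. g)" by simp
  also have "{..<L} \<inter> {..<m'} = {..<m'}" using m' by auto
  finally show ?thesis by simp
qed

locale wsetup = va: vec n L a + vb: vec n L b for n L a b
begin

abbreviation "\<alpha> \<equiv> va.\<alpha>"
abbreviation "\<beta> \<equiv> vb.\<alpha>"
abbreviation "ka \<equiv> va.kk"
abbreviation "kb \<equiv> vb.kk"
definition "Sa = abar_supp n L a"
definition "Sb = abar_supp n L b"
definition "U = Sa \<union> Sb"
definition "c j = (if j \<in> Sa \<inter> Sb then abar n L a j * abar n L b j / min ((abar n L a j)^2) ((abar n L b j)^2) else 0)"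
definition "Iset = {i. i < n \<and> a i \<noteq> 0 \<and> b i \<noteq> 0}"
definition "p = (\<Sum>i<n. \<alpha> i * \<beta> i)"
definition "A2 = (\<Sum>i\<in>Iset. (\<alpha> i)^2)"
definition "B2 = (\<Sum>i\<in>Iset. (\<beta> i)^2)"
definition "Q = (\<Sum>i<n. if \<alpha> i \<noteq> 0 \<and> \<beta> i \<noteq> 0 then max ((\<alpha> i)^2) ((\<beta> i)^2) else 0)"

lemma L: "L > 0" by (rule va.L)

lemma U_sub: "U \<subseteq> {0..<n*L}" unfolding U_def Sa_def Sb_def using va.supp_sub vb.supp_sub by auto
lemma U_ne: "U \<noteq> {}" unfolding U_def Sa_def using va.supp_ne by auto

lemma alpha_nz: "i < n \<Longrightarrow> \<alpha> i \<noteq> 0 \<longleftrightarrow> a i \<noteq> 0" using va.nrm_pos by (simp add: va.\<alpha>_def)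
lemma beta_nz: "i < n \<Longrightarrow> \<beta> i \<noteq> 0 \<longleftrightarrow> b i \<noteq> 0" using vb.nrm_pos by (simp add: vb.\<alpha>_def)

lemma blk: "i < n \<Longrightarrow> k < L \<Longrightarrow> i * L + k < n * L \<and> (i * L + k) div L = i \<and> (i * L + k) mod L = k"
proof -
  assume i: "i < n" and k: "k < L"
  have "i * L + k < (i + 1) * L" using k by simp
  also have "\<dots> \<le> n * L" using i by (intro mult_le_mono1) simp
  finally show ?thesis using k by simp
qed

lemma inSa: "i < n \<Longrightarrow> k < L \<Longrightarrow> i * L + k \<in> Sa \<longleftrightarrow> k < ka i"
  using blk unfolding Sa_def va.supp_eq by auto
lemma inSb: "i < n \<Longrightarrow> k < L \<Longrightarrow> i * L + k \<in> Sb \<longleftrightarrow> k < kb i"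
  using blk unfolding Sb_def vb.supp_eq by auto

lemma kmax: "i < n \<Longrightarrow> real (max (ka i) (kb i)) = real L * max ((\<alpha> i)^2) ((\<beta> i)^2)"
proof -
  assume i: "i < n"
  have "real (max (ka i) (kb i)) = max (real (ka i)) (real (kb i))" by (simp add: max_def)
  also have "\<dots> = max (real L * (\<alpha> i)^2) (real L * (\<beta> i)^2)"
    using va.kk_eq[OF i] vb.kk_eq[OF i] by (simp add: mult.commute)
  also have "\<dots> = real L * max ((\<alpha> i)^2) ((\<beta> i)^2)" by (simp add: max_mult_distrib_left)
  finally show ?thesis .
qed

lemma kmin: "i < n \<Longrightarrow> real (min (ka i) (kb i)) = real L * min ((\<alpha> i)^2) ((\<beta> i)^2)"
proof -
  assume i: "i < n"
  have "real (min (ka i) (kb i)) = min (real (ka i)) (real (kb i))" by (simp add: min_def)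
  also have "\<dots> = min (real L * (\<alpha> i)^2) (real L * (\<beta> i)^2)"
    using va.kk_eq[OF i] vb.kk_eq[OF i] by (simp add: mult.commute)
  also have "\<dots> = real L * min ((\<alpha> i)^2) ((\<beta> i)^2)" by (simp add: min_mult_distrib_left)
  finally show ?thesis .
qed

lemma card_U: "real (card U) = real L * (\<Sum>i<n. max ((\<alpha> i)^2) ((\<beta> i)^2))"
proof -
  have "real (card U) = (\<Sum>j<n*L. if j \<in> U then 1 else 0)"
    using U_sub by (intro card_as_sum) auto
  also have "\<dots> = (\<Sum>i<n. \<Sum>k<L. if i * L + k \<in> U then 1 else 0)" by (rule block_sum)
  also have "\<dots> = (\<Sum>i<n. real L * max ((\<alpha> i)^2) ((\<beta> i)^2))"
  proof (rule sum.cong[OF refl])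
    fix i assume i: "i \<in> {..<n}"
    have "(\<Sum>k<L. if i * L + k \<in> U then 1 else 0) = (\<Sum>k<L. if k < max (ka i) (kb i) then 1 else (0::real))"
      using i by (intro sum.cong refl) (auto simp: U_def inSa inSb)
    also have "\<dots> = real (max (ka i) (kb i))" using i va.kk_le vb.kk_le by (subst sum_lt) auto
    also have "\<dots> = real L * max ((\<alpha> i)^2) ((\<beta> i)^2)"
      using i by (simp add: kmax)
    finally show "(\<Sum>k<L. if i * L + k \<in> U then 1 else 0) = real L * max ((\<alpha> i)^2) ((\<beta> i)^2)" .
  qed
  also have "\<dots> = real L * (\<Sum>i<n. max ((\<alpha> i)^2) ((\<beta> i)^2))" by (simp add: sum_distrib_left)
  finally show ?thesis .
qed

lemma c_blk: "i < n \<Longrightarrow> k < L \<Longrightarrow> c (i * L + k) = (if k < min (ka i) (kb i) then \<alpha> i * \<beta> i / min ((\<alpha> i)^2) ((\<beta> i)^2) else 0)"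
proof -
  assume i: "i < n" and k: "k < L"
  note b = blk[OF i k]
  show ?thesis
    unfolding c_def using i k b
    by (auto simp: inSa inSb va.abar_eq vb.abar_eq)
qed

lemma c_out: "j \<notin> U \<Longrightarrow> c j = 0" unfolding c_def U_def by auto

lemma lem_cancel: "m \<noteq> 0 \<Longrightarrow> (l * m) * (x / m) = l * (x::real)" by simp

lemma sum_c_gen:
  assumes g: "g 0 = (0::real)"
  shows "(\<Sum>j\<in>U. g (c j)) = (\<Sum>i<n. real (min (ka i) (kb i)) * g (\<alpha> i * \<beta> i / min ((\<alpha> i)^2) ((\<beta> i)^2)))"
proof -
  have "(\<Sum>j\<in>U. g (c j)) = (\<Sum>j<n*L. g (c j))"
    using U_sub g c_out by (intro sum.mono_neutral_left) auto
  also have "\<dots> = (\<Sum>i<n. \<Sum>k<L. g (c (i * L + k)))" by (rule block_sum)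
  also have "\<dots> = (\<Sum>i<n. real (min (ka i) (kb i)) * g (\<alpha> i * \<beta> i / min ((\<alpha> i)^2) ((\<beta> i)^2)))"
  proof (rule sum.cong[OF refl])
    fix i assume i: "i \<in> {..<n}"
    have "(\<Sum>k<L. g (c (i * L + k))) = (\<Sum>k<L. if k < min (ka i) (kb i) then g (\<alpha> i * \<beta> i / min ((\<alpha> i)^2) ((\<beta> i)^2)) else 0)"
      using i g by (intro sum.cong refl) (auto simp: c_blk)
    also have "\<dots> = real (min (ka i) (kb i)) * g (\<alpha> i * \<beta> i / min ((\<alpha> i)^2) ((\<beta> i)^2))"
      using i va.kk_le vb.kk_le by (intro sum_lt) (simp add: le_trans[OF min.cobounded1])
    finally show "(\<Sum>k<L. g (c (i * L + k))) = real (min (ka i) (kb i)) * g (\<alpha> i * \<beta> i / min ((\<alpha> i)^2) ((\<beta> i)^2))" .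
  qed
  finally show ?thesis .
qed

lemma sum_c: "(\<Sum>j\<in>U. c j) = real L * p"
proof -
  have "(\<Sum>j\<in>U. c j) = (\<Sum>i<n. real (min (ka i) (kb i)) * (\<alpha> i * \<beta> i / min ((\<alpha> i)^2) ((\<beta> i)^2)))"
    using sum_c_gen[of "\<lambda>x. x"] by simp
  also have "\<dots> = (\<Sum>i<n. real L * (\<alpha> i * \<beta> i))"
  proof (rule sum.cong[OF refl])
    fix i assume "i \<in> {..<n}"
    then have i: "i < n" by simp
    show "real (min (ka i) (kb i)) * (\<alpha> i * \<beta> i / min ((\<alpha> i)^2) ((\<beta> i)^2)) = real L * (\<alpha> i * \<beta> i)"
    proof (cases "\<alpha> i = 0 \<or> \<beta> i = 0")
      case True then show ?thesis by auto
    next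
      case False
      then have "min ((\<alpha> i)^2) ((\<beta> i)^2) \<noteq> 0" by (simp add: min_def)
      then show ?thesis unfolding kmin[OF i] by (rule lem_cancel)
    qed
  qed
  finally show ?thesis by (simp add: p_def sum_distrib_left)
qed

lemma sum_c2: "(\<Sum>j\<in>U. (c j)^2) = real L * Q"
proof -
  have "(\<Sum>j\<in>U. (c j)^2) = (\<Sum>i<n. real (min (ka i) (kb i)) * (\<alpha> i * \<beta> i / min ((\<alpha> i)^2) ((\<beta> i)^2))^2)"
    using sum_c_gen[of "\<lambda>x. x^2"] by simp
  also have "\<dots> = (\<Sum>i<n. real L * (if \<alpha> i \<noteq> 0 \<and> \<beta> i \<noteq> 0 then max ((\<alpha> i)^2) ((\<beta> i)^2) else 0))"
  proof (rule sum.cong[OF refl])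
    fix i assume "i \<in> {..<n}"
    then have i: "i < n" by simp
    show "real (min (ka i) (kb i)) * (\<alpha> i * \<beta> i / min ((\<alpha> i)^2) ((\<beta> i)^2))^2
      = real L * (if \<alpha> i \<noteq> 0 \<and> \<beta> i \<noteq> 0 then max ((\<alpha> i)^2) ((\<beta> i)^2) else 0)"
    proof (cases "\<alpha> i = 0 \<or> \<beta> i = 0")
      case True then show ?thesis by auto
    next
      case False
      define x where "x = (\<alpha> i)^2"
      define y where "y = (\<beta> i)^2"
      have xy: "x > 0" "y > 0" using False by (auto simp: x_def y_def)
      have sq: "(\<alpha> i * \<beta> i / min x y)^2 = x * y / (min x y)^2"
        by (simp add: x_def y_def power_divide power_mult_distrib)
      have h: "min x y * (x * y / (min x y)^2) = max x y"
        using xy by (cases "x \<le> y") (auto simp: power2_eq_square min_def max_def)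
      have "real (min (ka i) (kb i)) * (\<alpha> i * \<beta> i / min ((\<alpha> i)^2) ((\<beta> i)^2))^2
          = (real L * min x y) * (x * y / (min x y)^2)"
        unfolding kmin[OF i] x_def[symmetric] y_def[symmetric] sq ..
      also have "\<dots> = real L * max x y" unfolding mult.assoc h ..
      finally show ?thesis using False by (simp add: x_def y_def)
    qed
  qed
  finally show ?thesis by (simp add: Q_def sum_distrib_left)
qed

lemma Iset_sub: "Iset \<subseteq> {..<n}" unfolding Iset_def by auto

lemma Iset_iff: "i \<in> Iset \<longleftrightarrow> i < n \<and> \<alpha> i \<noteq> 0 \<and> \<beta> i \<noteq> 0"
  unfolding Iset_def using alpha_nz beta_nz by auto

lemma sum_Iset: "(\<Sum>i\<in>Iset. f i) = (\<Sum>i<n. if \<alpha> i \<noteq> 0 \<and> \<beta> i \<noteq> 0 then f i else (0::real))"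
proof -
  have "(\<Sum>i\<in>{..<n} \<inter> Iset. f i) = (\<Sum>i<n. if i \<in> Iset then f i else 0)"
    by (rule sum.inter_restrict) simp
  moreover have "{..<n} \<inter> Iset = Iset" using Iset_sub by auto
  ultimately show ?thesis by (auto simp: Iset_iff intro!: sum.cong)
qed

lemma Q_le: "Q \<le> A2 + B2"
proof -
  have "Q \<le> (\<Sum>i<n. if \<alpha> i \<noteq> 0 \<and> \<beta> i \<noteq> 0 then (\<alpha> i)^2 + (\<beta> i)^2 else 0)"
    unfolding Q_def by (intro sum_mono) auto
  also have "\<dots> = A2 + B2" unfolding A2_def B2_def sum_Iset sum.distrib[symmetric]
    by (intro sum.cong) auto
  finally show ?thesis .
qed

lemma p_Iset: "p = (\<Sum>i<n. if \<alpha> i \<noteq> 0 \<and> \<beta> i \<noteq> 0 then \<alpha> i * \<beta> i else 0)"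
  unfolding p_def by (intro sum.cong) auto

lemma p_le: "\<bar>p\<bar> \<le> (A2 + B2) / 2"
proof -
  have "\<bar>p\<bar> \<le> (\<Sum>i<n. \<bar>if \<alpha> i \<noteq> 0 \<and> \<beta> i \<noteq> 0 then \<alpha> i * \<beta> i else 0\<bar>)"
    unfolding p_Iset by (rule sum_abs)
  also have "\<dots> \<le> (\<Sum>i<n. if \<alpha> i \<noteq> 0 \<and> \<beta> i \<noteq> 0 then ((\<alpha> i)^2 + (\<beta> i)^2) / 2 else 0)"
  proof (intro sum_mono)
    fix i
    have "\<bar>\<alpha> i * \<beta> i\<bar> \<le> ((\<alpha> i)^2 + (\<beta> i)^2) / 2"
      using sum_squares_bound[of "\<bar>\<alpha> i\<bar>" "\<bar>\<beta> i\<bar>"] by (simp add: abs_mult)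
    then show "\<bar>if \<alpha> i \<noteq> 0 \<and> \<beta> i \<noteq> 0 then \<alpha> i * \<beta> i else 0\<bar> \<le> (if \<alpha> i \<noteq> 0 \<and> \<beta> i \<noteq> 0 then ((\<alpha> i)^2 + (\<beta> i)^2) / 2 else 0)"
      by auto
  qed
  also have "\<dots> = (\<Sum>i<n. if \<alpha> i \<noteq> 0 \<and> \<beta> i \<noteq> 0 then (\<alpha> i)^2 + (\<beta> i)^2 else 0) / 2"
    unfolding sum_divide_distrib by (intro sum.cong) auto
  also have "(\<Sum>i<n. if \<alpha> i \<noteq> 0 \<and> \<beta> i \<noteq> 0 then (\<alpha> i)^2 + (\<beta> i)^2 else 0) = A2 + B2"
    unfolding A2_def B2_def sum_Iset sum.distrib[symmetric] by (intro sum.cong) auto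
  finally show ?thesis .
qed

lemma A2_le: "A2 \<le> 1"
proof -
  have "A2 \<le> (\<Sum>i<n. (\<alpha> i)^2)" unfolding A2_def using Iset_sub by (intro sum_mono2) auto
  then show ?thesis using va.sum_alpha_sq by simp
qed

lemma B2_le: "B2 \<le> 1"
proof -
  have "B2 \<le> (\<Sum>i<n. (\<beta> i)^2)" unfolding B2_def using Iset_sub by (intro sum_mono2) auto
  then show ?thesis using vb.sum_alpha_sq by simp
qed

lemma A2_nonneg: "A2 \<ge> 0" unfolding A2_def by (intro sum_nonneg) auto
lemma B2_nonneg: "B2 \<ge> 0" unfolding B2_def by (intro sum_nonneg) auto

lemma cardU_ge: "real (card U) \<ge> real L"
proof -
  have "(\<Sum>i<n. max ((\<alpha> i)^2) ((\<beta> i)^2)) \<ge> (\<Sum>i<n. (\<alpha> i)^2)" by (intro sum_mono) auto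
  then have "(\<Sum>i<n. max ((\<alpha> i)^2) ((\<beta> i)^2)) \<ge> 1" using va.sum_alpha_sq by simp
  then show ?thesis unfolding card_U using mult_left_mono[of 1 _ "real L"] by simp
qed

lemma cardU_le: "real (card U) \<le> 2 * real L"
proof -
  have "(\<Sum>i<n. max ((\<alpha> i)^2) ((\<beta> i)^2)) \<le> (\<Sum>i<n. (\<alpha> i)^2 + (\<beta> i)^2)" by (intro sum_mono) auto
  then have "(\<Sum>i<n. max ((\<alpha> i)^2) ((\<beta> i)^2)) \<le> 2" using va.sum_alpha_sq vb.sum_alpha_sq by (simp add: sum.distrib)
  then show ?thesis unfolding card_U using mult_left_mono[of _ 2 "real L"] by (simp add: mult.commute[of 2])
qed

lemma A2_zero: "A2 = 0 \<Longrightarrow> Iset = {}"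
proof (rule ccontr)
  assume A: "A2 = 0" and "Iset \<noteq> {}"
  then obtain i where i: "i \<in> Iset" by auto
  then have "(\<alpha> i)^2 \<le> A2" unfolding A2_def using Iset_sub finite_subset
    by (intro member_le_sum) auto
  moreover have "(\<alpha> i)^2 > 0" using i Iset_iff by auto
  ultimately show False using A by simp
qed

lemma c_zero: "Iset = {} \<Longrightarrow> c j = 0"
proof (rule ccontr)
  assume I: "Iset = {}" and cj: "c j \<noteq> 0"
  then have j: "j \<in> Sa" "j \<in> Sb" by (auto simp: c_def split: if_splits)
  then have jn: "j < n * L" unfolding Sa_def abar_supp_def by auto
  have jd: "j div L < n" using jn L by (simp add: div_less_iff_less_mult)
  have "j mod L < ka (j div L)" "j mod L < kb (j div L)"
    using j jn unfolding Sa_def Sb_def va.supp_eq vb.supp_eq by auto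
  then have "\<alpha> (j div L) \<noteq> 0" "\<beta> (j div L) \<noteq> 0" using va.kk_pos_iff[OF jd] vb.kk_pos_iff[OF jd] by auto
  then have "j div L \<in> Iset" using jd Iset_iff by auto
  then show False using I by simp
qed

lemma p_zero: "Iset = {} \<Longrightarrow> p = 0"
  unfolding p_Iset using Iset_iff by (intro sum.neutral) auto

lemma vinner_eq: "vinner n a b = vnorm n a * vnorm n b * p"
  unfolding vinner_def p_def va.\<alpha>_def vb.\<alpha>_def sum_distrib_left
  using va.nrm_pos vb.nrm_pos by (intro sum.cong) auto

lemma restr_a: "restr_norm Iset a = vnorm n a * sqrt A2"
proof -
  have "(\<Sum>i\<in>Iset. (a i)^2) = (vnorm n a)^2 * A2"
    unfolding A2_def va.alpha_sq sum_distrib_left using va.nrm_pos by (intro sum.cong) auto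
  then show ?thesis unfolding restr_norm_def using va.nrm_pos by (simp add: real_sqrt_mult)
qed

lemma restr_b: "restr_norm Iset b = vnorm n b * sqrt B2"
proof -
  have "(\<Sum>i\<in>Iset. (b i)^2) = (vnorm n b)^2 * B2"
    unfolding B2_def vb.alpha_sq sum_distrib_left using vb.nrm_pos by (intro sum.cong) auto
  then show ?thesis unfolding restr_norm_def using vb.nrm_pos by (simp add: real_sqrt_mult)
qed

end

lemma min_S_in:
  assumes "finite S" "S \<subseteq> U" "j \<in> S" "evp U i j \<omega>"
  shows "Min ((\<lambda>k. \<omega> (i,k)) ` S) = \<omega> (i,j)"
proof (rule Min_eqI)
  show "finite ((\<lambda>k. \<omega> (i,k)) ` S)" using assms by simp
  show "\<omega> (i,j) \<in> (\<lambda>k. \<omega> (i,k)) ` S" using assms by simp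
  fix y assume "y \<in> (\<lambda>k. \<omega> (i,k)) ` S"
  then obtain k where k: "k \<in> S" "y = \<omega> (i,k)" by auto
  show "\<omega> (i,j) \<le> y"
  proof (cases "k = j")
    case False
    then have "k \<in> U - {j}" using k assms by auto
    then have "\<omega> (i,j) < \<omega> (i,k)" using assms(4) unfolding evp_def by blast
    then show ?thesis using k by simp
  qed (use k in simp)
qed

lemma min_S_out:
  assumes "finite S" "S \<subseteq> U" "S \<noteq> {}" "j \<notin> S" "evp U i j \<omega>"
  shows "Min ((\<lambda>k. \<omega> (i,k)) ` S) > \<omega> (i,j)"
proof -
  have "Min ((\<lambda>k. \<omega> (i,k)) ` S) \<in> (\<lambda>k. \<omega> (i,k)) ` S" using assms by (intro Min_in) auto
  then obtain k where k: "k \<in> S" "Min ((\<lambda>k. \<omega> (i,k)) ` S) = \<omega> (i,k)" by auto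
  then have "k \<in> U - {j}" using assms by auto
  then show ?thesis using assms(5) k unfolding evp_def by auto
qed

lemma argmin_S:
  assumes "S \<subseteq> U" "j \<in> S" "evp U i j \<omega>"
  shows "(ARG_MIN (\<lambda>k. \<omega> (i,k)) k. k \<in> S) = j"
proof -
  have isj: "is_arg_min (\<lambda>k. \<omega> (i,k)) (\<lambda>k. k \<in> S) j"
  proof -
    have "\<not> (\<exists>y. y \<in> S \<and> \<omega> (i,y) < \<omega> (i,j))"
    proof
      assume "\<exists>y. y \<in> S \<and> \<omega> (i,y) < \<omega> (i,j)"
      then obtain y where y: "y \<in> S" "\<omega> (i,y) < \<omega> (i,j)" by auto
      then have "y \<noteq> j" by auto
      then have "y \<in> U - {j}" using y assms by auto
      then have "\<omega> (i,j) < \<omega> (i,y)" using assms(3) unfolding evp_def by blast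
      then show False using y by simp
    qed
    then show ?thesis unfolding is_arg_min_def using assms by auto
  qed
  have uniq: "x = j" if "is_arg_min (\<lambda>k. \<omega> (i,k)) (\<lambda>k. k \<in> S) x" for x
  proof (rule ccontr)
    assume "x \<noteq> j"
    moreover have "x \<in> S" using that unfolding is_arg_min_def by auto
    ultimately have "x \<in> U - {j}" using assms by auto
    then have "\<omega> (i,j) < \<omega> (i,x)" using assms(3) unfolding evp_def by auto
    then show False using that assms(2) unfolding is_arg_min_def by auto
  qed
  show ?thesis unfolding arg_min_def using isj uniq by (rule some_equality)
qed

lemma Yr_val: "finite U \<Longrightarrow> j \<in> U \<Longrightarrow> evp U i j \<omega> \<Longrightarrow> Yr U i \<omega> = \<omega> (i,j)"
proof -
  assume U: "finite U" and j: "j \<in> U" "evp U i j \<omega>"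
  have "Yr U i \<omega> = (\<Sum>k\<in>U. if k = j then \<omega> (i,k) else 0)"
    unfolding Yr_def using j by (intro sum.cong refl) (auto dest: evp_unique)
  then show ?thesis using U j by simp
qed

lemma Xr_val: "finite U \<Longrightarrow> j \<in> U \<Longrightarrow> evp U i j \<omega> \<Longrightarrow> Xr U c i \<omega> = c j"
proof -
  assume U: "finite U" and j: "j \<in> U" "evp U i j \<omega>"
  have "Xr U c i \<omega> = (\<Sum>k\<in>U. if k = j then c k else 0)"
    unfolding Xr_def using j by (intro sum.cong refl) (auto dest: evp_unique)
  then show ?thesis using U j by simp
qed

context wsetup begin

lemma finSa: "finite Sa" using U_sub finite_subset unfolding U_def by blast
lemma finSb: "finite Sb" using U_sub finite_subset unfolding U_def by blast
lemma finU: "finite U" using U_sub finite_subset by blast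
lemma Sa_ne: "Sa \<noteq> {}" unfolding Sa_def by (rule va.supp_ne)
lemma Sb_ne: "Sb \<noteq> {}" unfolding Sb_def by (rule vb.supp_ne)

lemma hash_in: "j \<in> U \<Longrightarrow> evp U i j \<omega> \<Longrightarrow> j \<in> Sa \<Longrightarrow> wmh_hash n L a \<omega> i = \<omega> (i,j)"
  unfolding wmh_hash_def Sa_def[symmetric] using finSa by (intro min_S_in) (auto simp: U_def)

lemma hash_out: "j \<in> U \<Longrightarrow> evp U i j \<omega> \<Longrightarrow> j \<notin> Sa \<Longrightarrow> wmh_hash n L a \<omega> i > \<omega> (i,j)"
  unfolding wmh_hash_def Sa_def[symmetric] using finSa Sa_ne by (intro min_S_out) (auto simp: U_def)

lemma hash_inb: "j \<in> U \<Longrightarrow> evp U i j \<omega> \<Longrightarrow> j \<in> Sb \<Longrightarrow> wmh_hash n L b \<omega> i = \<omega> (i,j)"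
  unfolding wmh_hash_def Sb_def[symmetric] using finSb by (intro min_S_in) (auto simp: U_def)

lemma hash_outb: "j \<in> U \<Longrightarrow> evp U i j \<omega> \<Longrightarrow> j \<notin> Sb \<Longrightarrow> wmh_hash n L b \<omega> i > \<omega> (i,j)"
  unfolding wmh_hash_def Sb_def[symmetric] using finSb Sb_ne by (intro min_S_out) (auto simp: U_def)

lemma Ylink: "j \<in> U \<Longrightarrow> evp U i j \<omega> \<Longrightarrow> min (wmh_hash n L a \<omega> i) (wmh_hash n L b \<omega> i) = Yr U i \<omega>"
proof -
  assume j: "j \<in> U" "evp U i j \<omega>"
  have "min (wmh_hash n L a \<omega> i) (wmh_hash n L b \<omega> i) = \<omega> (i,j)"
  proof (cases "j \<in> Sa")
    case True
    then show ?thesis using j hash_in[OF j True] hash_inb[OF j] hash_outb[OF j] by (cases "j \<in> Sb") auto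
  next
    case False
    then have "j \<in> Sb" using j by (auto simp: U_def)
    then show ?thesis using hash_out[OF j False] hash_inb[OF j] by auto
  qed
  then show ?thesis using Yr_val[OF finU j] by simp
qed

lemma Xlink: "j \<in> U \<Longrightarrow> evp U i j \<omega> \<Longrightarrow>
  (if wmh_hash n L a \<omega> i = wmh_hash n L b \<omega> i then 1 else 0) *
    (wmh_val n L a \<omega> i * wmh_val n L b \<omega> i / min ((wmh_val n L a \<omega> i)^2) ((wmh_val n L b \<omega> i)^2))
  = Xr U c i \<omega>"
proof -
  assume j: "j \<in> U" "evp U i j \<omega>"
  have "(if wmh_hash n L a \<omega> i = wmh_hash n L b \<omega> i then 1 else 0) *
    (wmh_val n L a \<omega> i * wmh_val n L b \<omega> i / min ((wmh_val n L a \<omega> i)^2) ((wmh_val n L b \<omega> i)^2)) = c j"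
  proof (cases "j \<in> Sa \<and> j \<in> Sb")
    case True
    have va: "wmh_val n L a \<omega> i = abar n L a j"
      unfolding wmh_val_def Sa_def[symmetric] using True j by (subst argmin_S[of Sa U j i \<omega>]) (auto simp: U_def)
    have vb: "wmh_val n L b \<omega> i = abar n L b j"
      unfolding wmh_val_def Sb_def[symmetric] using True j by (subst argmin_S[of Sb U j i \<omega>]) (auto simp: U_def)
    show ?thesis using True hash_in[OF j] hash_inb[OF j] unfolding va vb c_def by simp
  next
    case False
    then have "wmh_hash n L a \<omega> i \<noteq> wmh_hash n L b \<omega> i"
      using j hash_in[OF j] hash_inb[OF j] hash_out[OF j] hash_outb[OF j] by (auto simp: U_def)
    then show ?thesis using False unfolding c_def by auto
  qed
  then show ?thesis using Xr_val[OF finU j] by simp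
qed

lemma est_formula:
  assumes ev: "\<forall>i<m. \<exists>j\<in>U. evp U i j \<omega>"
  shows "wmh_estimate m L (wmh_sketch n L a \<omega>) (wmh_sketch n L b \<omega>)
    = vnorm n a * vnorm n b * ((1 / real L) * (real m / (\<Sum>i<m. Yr U i \<omega>) - 1) / real m * (\<Sum>i<m. Xr U c i \<omega>))"
proof -
  have s1: "(\<Sum>i<m. min (wmh_hash n L a \<omega> i) (wmh_hash n L b \<omega> i)) = (\<Sum>i<m. Yr U i \<omega>)"
    using ev Ylink by (intro sum.cong refl) blast
  have s2: "(\<Sum>i<m. (if wmh_hash n L a \<omega> i = wmh_hash n L b \<omega> i then 1 else 0) *
    (wmh_val n L a \<omega> i * wmh_val n L b \<omega> i / min ((wmh_val n L a \<omega> i)^2) ((wmh_val n L b \<omega> i)^2)))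
    = (\<Sum>i<m. Xr U c i \<omega>)"
    using ev Xlink by (intro sum.cong refl) blast
  show ?thesis unfolding wmh_estimate_def wmh_sketch_def Let_def using s1 s2 by simp
qed

end

lemma arithX:
  fixes L MM D Q \<epsilon> mr :: real
  assumes L: "L > 0" and MM: "MM > 0" "MM \<le> 2 * L" and D: "D > 0" and Q: "0 \<le> Q" "Q \<le> 2 * D^2"
    and e: "\<epsilon> > 0" and m: "mr * \<epsilon>^2 \<ge> 6144"
  shows "(L * Q / MM) / (mr * (\<epsilon> * D * L / (4 * MM))^2) \<le> 1 / 6"
proof -
  have mr: "mr > 0" using m e by (smt (verit) mult_nonpos_nonneg zero_le_power2)
  have den: "mr * \<epsilon>^2 * D^2 * L > 0" using mr e D L by simp
  have eq: "(L * Q / MM) / (mr * (\<epsilon> * D * L / (4 * MM))^2) = 16 * Q * MM / (mr * \<epsilon>^2 * D^2 * L)"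
    using L MM D e mr by (simp add: field_simps power2_eq_square)
  have "16 * Q * MM \<le> 16 * (2 * D^2) * (2 * L)"
    using Q MM by (intro mult_mono) auto
  then have "16 * Q * MM / (mr * \<epsilon>^2 * D^2 * L) \<le> 64 * D^2 * L / (mr * \<epsilon>^2 * D^2 * L)"
    using den by (intro divide_right_mono) auto
  also have "\<dots> = 64 / (mr * \<epsilon>^2)" using D L by (simp add: field_simps)
  also have "\<dots> \<le> 64 / 6144" using m by (intro divide_left_mono) auto
  finally show ?thesis using eq by simp
qed

lemma arithY:
  fixes MM mr \<epsilon> :: real
  assumes MM: "MM \<ge> 1" and e: "\<epsilon> > 0" and m: "mr * \<epsilon>^2 \<ge> 6144"
  shows "(2 / ((MM + 1) * (MM + 2)) - (1 / (MM + 1))^2) / (mr * ((\<epsilon> / 32) * (1 / (MM + 1)))^2) \<le> 1 / 6"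
proof -
  have mr: "mr > 0" using m e by (smt (verit) mult_nonpos_nonneg zero_le_power2)
  define u where "u = 1 / (MM + 1)"
  have u: "u > 0" using MM by (simp add: u_def)
  have "2 / ((MM + 1) * (MM + 2)) \<le> 2 / ((MM + 1) * (MM + 1))"
    using MM by (intro divide_left_mono mult_left_mono) auto
  then have num: "2 / ((MM + 1) * (MM + 2)) - (1 / (MM + 1))^2 \<le> u^2"
    by (simp add: u_def power2_eq_square)
  have den: "mr * ((\<epsilon> / 32) * u)^2 > 0" using mr e u by simp
  have "(2 / ((MM + 1) * (MM + 2)) - (1 / (MM + 1))^2) / (mr * ((\<epsilon> / 32) * u)^2) \<le> u^2 / (mr * ((\<epsilon> / 32) * u)^2)"
    using num den by (intro divide_right_mono) auto
  also have "\<dots> = 1024 / (mr * \<epsilon>^2)" using u by (simp add: field_simps power2_eq_square)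
  also have "\<dots> \<le> 1024 / 6144" using m by (intro divide_left_mono) auto
  finally show ?thesis by (simp add: u_def)
qed

lemma final_arith:
  fixes M L p D \<epsilon> Xb Yb :: real
  assumes L: "L > 0" and hML: "M \<ge> L" and M1: "M \<ge> 1" and e: "0 < \<epsilon>" "\<epsilon> < 1"
    and D: "0 \<le> D" "D \<le> 1" and pD: "\<bar>p\<bar> \<le> D"
    and Y: "\<bar>Yb - 1 / (M + 1)\<bar> < (\<epsilon> / 32) * (1 / (M + 1))"
    and X: "\<bar>(M / L) * Xb - p\<bar> \<le> \<epsilon> * D / 4"
  shows "\<bar>(1 / L) * (1 / Yb - 1) * Xb - p\<bar> \<le> \<epsilon> * D"
proof -
  define \<delta> where "\<delta> = \<epsilon> / 32"
  define \<nu> where "\<nu> = 1 / (M + 1)"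
  have \<nu>: "\<nu> > 0" using M1 by (simp add: \<nu>_def)
  have \<delta>: "0 < \<delta>" "\<delta> \<le> 1/32" using e by (auto simp: \<delta>_def)
  have Y': "\<bar>Yb - \<nu>\<bar> < \<delta> * \<nu>" using Y by (simp add: \<delta>_def \<nu>_def)
  have "\<nu> - \<delta> * \<nu> < Yb" using Y' by (simp only: abs_less_iff) linarith
  moreover have "\<nu> * (1 - \<delta>) = \<nu> - \<delta> * \<nu>" by (simp add: algebra_simps)
  ultimately have Ylo: "Yb > \<nu> * (1 - \<delta>)" by simp
  have pos: "\<nu> * (1 - \<delta>) > 0" using \<nu> \<delta> by simp
  then have Ypos: "Yb > 0" using Ylo by linarith
  have "\<bar>1 / Yb - 1 / \<nu>\<bar> = \<bar>\<nu> - Yb\<bar> / (Yb * \<nu>)"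
    using Ypos \<nu> by (simp add: field_simps abs_div abs_mult)
  also have "\<dots> \<le> \<delta> * \<nu> / (Yb * \<nu>)"
    using Y' Ypos \<nu> by (intro divide_right_mono) (auto simp: abs_minus_commute)
  also have "\<dots> = \<delta> / Yb" using \<nu> by simp
  also have "\<dots> \<le> \<delta> / (\<nu> * (1 - \<delta>))"
    using Ylo \<delta> pos Ypos by (intro divide_left_mono) (auto intro!: mult_pos_pos)
  also have "\<dots> \<le> 2 * \<delta> / \<nu>"
    using \<delta> \<nu> by (simp add: field_simps)
  also have "\<dots> = 2 * \<delta> * (M + 1)" using M1 by (simp add: \<nu>_def)
  also have "\<dots> \<le> 4 * \<delta> * M" using M1 \<delta> by simp
  finally have u: "\<bar>1 / Yb - 1 / \<nu>\<bar> \<le> 4 * \<delta> * M" .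
  have "1 / \<nu> = M + 1" by (simp add: \<nu>_def)
  then have u': "\<bar>(1 / Yb - 1) - M\<bar> \<le> 4 * \<delta> * M" using u by simp
  define Mt where "Mt = (1 / L) * (1 / Yb - 1)"
  define T where "T = M / L"
  have T: "T \<ge> 1" using hML L by (simp add: T_def)
  have MtT: "\<bar>Mt - T\<bar> \<le> 4 * \<delta> * T"
  proof -
    have "\<bar>Mt - T\<bar> = \<bar>(1 / Yb - 1) - M\<bar> / L" using L
      by (simp add: Mt_def T_def abs_div diff_divide_distrib[symmetric])
    also have "\<dots> \<le> 4 * \<delta> * M / L" using u' L by (intro divide_right_mono) auto
    finally show ?thesis by (simp add: T_def)
  qed
  have X': "\<bar>T * Xb - p\<bar> \<le> \<epsilon> * D / 4" unfolding T_def by (rule X)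
  have TX: "\<bar>T * Xb\<bar> \<le> D + \<epsilon> * D / 4" using X' pD abs_triangle_ineq[of "T * Xb - p" p] by linarith
  have "\<bar>Mt * Xb - p\<bar> \<le> \<bar>T * Xb - p\<bar> + \<bar>Mt - T\<bar> * \<bar>Xb\<bar>"
  proof -
    have "Mt * Xb - p = (T * Xb - p) + (Mt - T) * Xb" by (simp add: algebra_simps)
    then show ?thesis by (metis abs_mult abs_triangle_ineq)
  qed
  also have "\<bar>Mt - T\<bar> * \<bar>Xb\<bar> \<le> 4 * \<delta> * T * \<bar>Xb\<bar>" using MtT by (intro mult_right_mono) auto
  also have "4 * \<delta> * T * \<bar>Xb\<bar> = 4 * \<delta> * \<bar>T * Xb\<bar>" using T by (simp add: abs_mult)
  also have "\<dots> \<le> 4 * \<delta> * (D + \<epsilon> * D / 4)" using TX \<delta> by (intro mult_left_mono) auto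
  finally have "\<bar>Mt * Xb - p\<bar> \<le> \<epsilon> * D / 4 + 4 * \<delta> * (D + \<epsilon> * D / 4)" using X' by linarith
  also have "\<dots> \<le> \<epsilon> * D"
  proof -
    have "4 * \<delta> * (D + \<epsilon> * D / 4) = \<epsilon> * D / 8 + \<epsilon> * (\<epsilon> * D) / 32" by (simp add: \<delta>_def algebra_simps)
    moreover have "\<epsilon> * (\<epsilon> * D) \<le> \<epsilon> * D" using e D by (simp add: mult_left_le_one_le)
    moreover have "\<epsilon> * D \<ge> 0" using e D by simp
    ultimately show ?thesis by linarith
  qed
  finally show ?thesis by (simp add: Mt_def)
qed


locale full = wsetup n L a b for n L a b +
  fixes m :: nat and \<epsilon> :: real
  assumes e: "0 < \<epsilon>" "\<epsilon> < 1" and mbig: "real m \<ge> 6144 / \<epsilon>^2"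
begin

sublocale H: hs m "n * L" U
  by unfold_locales (use U_sub U_ne in auto)

lemma m_eps: "real m * \<epsilon>^2 \<ge> 6144"
  using mbig e by (simp add: divide_le_eq)

lemma m_pos: "m \<ge> 1"
proof -
  have "real m > 0" using mbig e by (smt (verit) divide_pos_pos zero_less_power)
  then show ?thesis by simp
qed

definition "MM = real (card U)"
definition "D = max (sqrt A2) (sqrt B2)"
definition "\<mu>X = (\<Sum>j\<in>U. c j) / MM"
definition "\<mu>Y = 1 / (MM + 1)"
definition "t1 = (if D > 0 then \<epsilon> * D * real L / (4 * MM) else 1)"
definition "Xb \<omega> = (\<Sum>i\<in>{0..<m}. Xr U c i \<omega>) / real m" for \<omega>
definition "Yb \<omega> = (\<Sum>i\<in>{0..<m}. Yr U i \<omega>) / real m" for \<omega>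

lemma MM_ge: "MM \<ge> real L" unfolding MM_def by (rule cardU_ge)
lemma MM_le: "MM \<le> 2 * real L" unfolding MM_def by (rule cardU_le)
lemma L1: "real L \<ge> 1" using L by simp
lemma MM_pos: "MM > 0" using MM_ge L1 by simp
lemma MM_eq: "MM = real H.M" unfolding MM_def ..

lemma D_nonneg: "D \<ge> 0" unfolding D_def using A2_nonneg by (simp add: le_max_iff_disj)
lemma D_le1: "D \<le> 1" unfolding D_def using A2_le B2_le by simp
lemma A2_le_D: "A2 \<le> D^2"
proof -
  have "sqrt A2 \<le> D" unfolding D_def by simp
  then have "(sqrt A2)^2 \<le> D^2" using A2_nonneg by (intro power_mono) auto
  then show ?thesis using A2_nonneg by simp
qed
lemma B2_le_D: "B2 \<le> D^2"
proof -
  have "sqrt B2 \<le> D" unfolding D_def by simp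
  then have "(sqrt B2)^2 \<le> D^2" using B2_nonneg by (intro power_mono) auto
  then show ?thesis using B2_nonneg by simp
qed

lemma p_le_D: "\<bar>p\<bar> \<le> D"
proof -
  have "(A2 + B2) / 2 \<le> D^2" using A2_le_D B2_le_D by simp
  then have "\<bar>p\<bar> \<le> D^2" using p_le by (rule order_trans[rotated])
  also have "D^2 \<le> D" using D_nonneg D_le1 by (simp add: power2_eq_square mult_left_le_one_le)
  finally show ?thesis .
qed

lemma D_zero: "\<not> D > 0 \<Longrightarrow> Iset = {}"
proof -
  assume "\<not> D > 0"
  then have "D = 0" using D_nonneg by simp
  then have "sqrt A2 = 0" unfolding D_def using A2_nonneg
    by (metis max.cobounded1 order_antisym real_sqrt_ge_zero)
  then have "A2 = 0" by simp
  then show ?thesis by (rule A2_zero)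
qed

lemma Xr_meas_P: "i < m \<Longrightarrow> Xr U c i \<in> borel_measurable H.P"
  using H.integ_X by (rule borel_measurable_integrable)
lemma Yr_meas_P: "i < m \<Longrightarrow> Yr U i \<in> borel_measurable H.P"
  using H.integ_Y by (rule borel_measurable_integrable)

lemma Xb_meas[measurable]: "Xb \<in> borel_measurable H.P"
proof -
  have "(\<lambda>\<omega>. \<Sum>i\<in>{0..<m}. Xr U c i \<omega>) \<in> borel_measurable H.P"
    by (rule borel_measurable_sum) (auto intro: Xr_meas_P)
  then show ?thesis unfolding Xb_def[abs_def] by simp
qed

lemma Yb_meas[measurable]: "Yb \<in> borel_measurable H.P"
proof -
  have "(\<lambda>\<omega>. \<Sum>i\<in>{0..<m}. Yr U i \<omega>) \<in> borel_measurable H.P"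
    by (rule borel_measurable_sum) (auto intro: Yr_meas_P)
  then show ?thesis unfolding Yb_def[abs_def] by simp
qed

lemma ev_meas[measurable]: "Measurable.pred H.P (\<lambda>\<omega>. \<forall>i<m. \<exists>j\<in>U. evp U i j \<omega>)"
proof -
  have "Measurable.pred H.P (\<lambda>\<omega>. \<forall>i\<in>{..<m}. \<exists>j\<in>U. evp U i j \<omega>)"
    using finU by (intro pred_intros_finite) (auto intro: H.evp_meas)
  then show ?thesis by (simp add: lessThan_iff)
qed

lemma indX: "prob_space.indep_vars H.P (\<lambda>_. borel) (\<lambda>i. Xr U c i) {0..<m}"
  by (rule H.indep_rows[OF m_pos]) (auto simp: H.Xr_restr)

lemma indY: "prob_space.indep_vars H.P (\<lambda>_. borel) (\<lambda>i. Yr U i) {0..<m}"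
  by (rule H.indep_rows[OF m_pos]) (auto simp: H.Yr_restr)

lemma Q_nonneg: "Q \<ge> 0" unfolding Q_def by (intro sum_nonneg) (auto simp: le_max_iff_disj)

lemma BX: "H.prob {\<omega>\<in>space H.P. \<bar>Xb \<omega> - \<mu>X\<bar> \<ge> t1} \<le> 1/6"
proof (cases "D > 0")
  case True
  have t1: "t1 = \<epsilon> * D * real L / (4 * MM)" using True by (simp add: t1_def)
  have t1pos: "t1 > 0" unfolding t1 using True e L MM_pos by simp
  have "H.prob {\<omega>\<in>space H.P. \<bar>(\<Sum>i\<in>{0..<m}. Xr U c i \<omega>) / real (card {0..<m}) - \<mu>X\<bar> \<ge> t1}
      \<le> ((\<Sum>j\<in>U. (c j)^2) / real H.M - \<mu>X^2) / (real (card {0..<m}) * t1^2)"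
    by (rule H.cheb_mean[OF _ _ indX]) (use m_pos t1pos in \<open>auto intro: H.integ_X H.integ_X2 simp: H.EX H.EX2 \<mu>X_def MM_def\<close>)
  also have "\<dots> = ((\<Sum>j\<in>U. (c j)^2) / real H.M - \<mu>X^2) / (real m * t1^2)" by simp
  also have "\<dots> \<le> ((\<Sum>j\<in>U. (c j)^2) / real H.M) / (real m * t1^2)"
    using t1pos m_pos by (intro divide_right_mono) auto
  also have "\<dots> = (real L * Q / MM) / (real m * (\<epsilon> * D * real L / (4 * MM))^2)"
    unfolding sum_c2 t1 MM_def ..
  also have "\<dots> \<le> 1/6"
  proof (rule arithX)
    show "0 < real L" using L by simp
    show "0 < MM" by (rule MM_pos)
    show "MM \<le> 2 * real L" by (rule MM_le)
    show "0 < D" by (rule True)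
    show "0 \<le> Q" by (rule Q_nonneg)
    show "Q \<le> 2 * D^2" using Q_le A2_le_D B2_le_D by linarith
    show "0 < \<epsilon>" using e by simp
    show "6144 \<le> real m * \<epsilon>^2" by (rule m_eps)
  qed
  finally show ?thesis by (simp add: Xb_def)
next
  case False
  then have I: "Iset = {}" by (rule D_zero)
  have c0: "c = (\<lambda>_. 0)" by (rule ext) (rule c_zero[OF I])
  have "Xb \<omega> = 0" for \<omega> unfolding Xb_def Xr_def c0 by simp
  moreover have "\<mu>X = 0" unfolding \<mu>X_def c0 by simp
  moreover have "t1 = 1" using False by (simp add: t1_def)
  ultimately show ?thesis by simp
qed

lemma BY: "H.prob {\<omega>\<in>space H.P. \<bar>Yb \<omega> - \<mu>Y\<bar> \<ge> (\<epsilon> / 32) * \<mu>Y} \<le> 1/6"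
proof -
  have tpos: "(\<epsilon> / 32) * \<mu>Y > 0" using e MM_pos by (simp add: \<mu>Y_def)
  have "H.prob {\<omega>\<in>space H.P. \<bar>(\<Sum>i\<in>{0..<m}. Yr U i \<omega>) / real (card {0..<m}) - \<mu>Y\<bar> \<ge> (\<epsilon> / 32) * \<mu>Y}
      \<le> (2 / ((MM + 1) * (MM + 2)) - \<mu>Y^2) / (real (card {0..<m}) * ((\<epsilon> / 32) * \<mu>Y)^2)"
    by (rule H.cheb_mean[OF _ _ indY]) (use m_pos tpos in \<open>auto intro: H.integ_Y H.integ_Ysq simp: H.EY H.EY2 \<mu>Y_def MM_def\<close>)
  also have "\<dots> \<le> 1/6"
    unfolding \<mu>Y_def using arithY[OF _ _ m_eps] MM_ge L1 e by simp
  finally show ?thesis by (simp add: Yb_def)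
qed

lemma BN: "H.prob {\<omega>\<in>space H.P. \<not> (\<forall>i<m. \<exists>j\<in>U. evp U i j \<omega>)} = 0"
proof -
  have "AE \<omega> in H.P. \<forall>i\<in>{..<m}. \<exists>j\<in>U. evp U i j \<omega>"
    by (rule eventually_ball_finite) (auto intro: H.AE_ex)
  then have ae: "AE \<omega> in H.P. \<forall>i<m. \<exists>j\<in>U. evp U i j \<omega>" by eventually_elim auto
  have "{\<omega>\<in>space H.P. \<not> (\<forall>i<m. \<exists>j\<in>U. evp U i j \<omega>)} \<in> sets H.P" by measurable
  then have "(AE \<omega> in H.P. \<forall>i<m. \<exists>j\<in>U. evp U i j \<omega>) \<longleftrightarrow>
     emeasure H.P {\<omega>\<in>space H.P. \<not> (\<forall>i<m. \<exists>j\<in>U. evp U i j \<omega>)} = 0"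
    by (rule AE_iff_measurable[OF _ refl])
  then have "emeasure H.P {\<omega>\<in>space H.P. \<not> (\<forall>i<m. \<exists>j\<in>U. evp U i j \<omega>)} = 0"
    using ae by simp
  then show ?thesis by (simp add: measure_def)
qed

lemma est_alg: "real m > 0 \<Longrightarrow> (1 / real L) * (real m / S - 1) / real m * X = (1 / real L) * (1 / (S / real m) - 1) * (X / real m)"
  by simp

lemma main:
  "\<exists>A\<in>sets (hash_space m n L). measure (hash_space m n L) A \<ge> 2/3 \<and>
     (\<forall>h\<in>A. \<bar>wmh_estimate m L (wmh_sketch n L a h) (wmh_sketch n L b h) - vinner n a b\<bar>
        \<le> \<epsilon> * max (restr_norm {i. i < n \<and> a i \<noteq> 0 \<and> b i \<noteq> 0} a * vnorm n b)
                    (vnorm n a * restr_norm {i. i < n \<and> a i \<noteq> 0 \<and> b i \<noteq> 0} b))"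
proof -
  have hsP: "hash_space m n L = H.P" unfolding hash_space_def H.P_def ..
  define A where "A = {\<omega>\<in>space H.P. \<bar>Xb \<omega> - \<mu>X\<bar> < t1 \<and> \<bar>Yb \<omega> - \<mu>Y\<bar> < (\<epsilon> / 32) * \<mu>Y \<and> (\<forall>i<m. \<exists>j\<in>U. evp U i j \<omega>)}"
  have Asets: "A \<in> sets H.P" unfolding A_def by measurable
  have prob: "H.prob A \<ge> 2/3"
  proof -
    let ?BX = "{\<omega>\<in>space H.P. \<bar>Xb \<omega> - \<mu>X\<bar> \<ge> t1}"
    let ?BY = "{\<omega>\<in>space H.P. \<bar>Yb \<omega> - \<mu>Y\<bar> \<ge> (\<epsilon> / 32) * \<mu>Y}"
    let ?BN = "{\<omega>\<in>space H.P. \<not> (\<forall>i<m. \<exists>j\<in>U. evp U i j \<omega>)}"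
    have sub: "space H.P - A \<subseteq> ?BX \<union> ?BY \<union> ?BN" unfolding A_def by auto
    have "H.prob (space H.P - A) \<le> H.prob (?BX \<union> ?BY \<union> ?BN)"
      by (rule H.finite_measure_mono[OF sub]) measurable
    also have "\<dots> \<le> H.prob (?BX \<union> ?BY) + H.prob ?BN"
      by (rule measure_Un_le) measurable
    also have "H.prob (?BX \<union> ?BY) \<le> H.prob ?BX + H.prob ?BY"
      by (rule measure_Un_le) measurable
    finally have "H.prob (space H.P - A) \<le> 1/3" using BX BY BN by linarith
    moreover have "H.prob (space H.P - A) = 1 - H.prob A" using Asets by (rule H.prob_compl)
    ultimately show ?thesis by linarith
  qed
  have pt: "\<bar>wmh_estimate m L (wmh_sketch n L a h) (wmh_sketch n L b h) - vinner n a b\<bar>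
        \<le> \<epsilon> * max (restr_norm {i. i < n \<and> a i \<noteq> 0 \<and> b i \<noteq> 0} a * vnorm n b)
                    (vnorm n a * restr_norm {i. i < n \<and> a i \<noteq> 0 \<and> b i \<noteq> 0} b)" if h: "h \<in> A" for h
  proof -
    have hX: "\<bar>Xb h - \<mu>X\<bar> < t1" and hY: "\<bar>Yb h - \<mu>Y\<bar> < (\<epsilon> / 32) * \<mu>Y"
      and hev: "\<forall>i<m. \<exists>j\<in>U. evp U i j h" using h unfolding A_def by auto
    have mpos: "real m > 0" using m_pos by simp
    have est: "wmh_estimate m L (wmh_sketch n L a h) (wmh_sketch n L b h)
        = vnorm n a * vnorm n b * ((1 / real L) * (1 / Yb h - 1) * Xb h)"
      unfolding est_formula[OF hev] est_alg[OF mpos] Xb_def Yb_def atLeast0LessThan ..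
    have Xc: "\<bar>(MM / real L) * Xb h - p\<bar> \<le> \<epsilon> * D / 4"
    proof (cases "D > 0")
      case True
      have "(MM / real L) * \<mu>X = p" unfolding \<mu>X_def sum_c using MM_pos L by simp
      then have "(MM / real L) * Xb h - p = (MM / real L) * (Xb h - \<mu>X)" by (simp add: algebra_simps)
      then have "\<bar>(MM / real L) * Xb h - p\<bar> = (MM / real L) * \<bar>Xb h - \<mu>X\<bar>"
        using MM_pos L by (simp add: abs_mult)
      also have "\<dots> \<le> (MM / real L) * t1" using hX MM_pos L by (intro mult_left_mono) auto
      also have "\<dots> = \<epsilon> * D / 4" using True MM_pos L by (simp add: t1_def)
      finally show ?thesis .
    next
      case False
      then have I: "Iset = {}" by (rule D_zero)
      have c0: "c = (\<lambda>_. 0)" by (rule ext) (rule c_zero[OF I])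
      have "Xb h = 0" unfolding Xb_def Xr_def c0 by simp
      then show ?thesis using p_zero[OF I] D_nonneg e by simp
    qed
    have Yc: "\<bar>Yb h - 1 / (MM + 1)\<bar> < (\<epsilon> / 32) * (1 / (MM + 1))" using hY by (simp add: \<mu>Y_def)
    have fa: "\<bar>(1 / real L) * (1 / Yb h - 1) * Xb h - p\<bar> \<le> \<epsilon> * D"
      by (rule final_arith[OF _ MM_ge _ e D_nonneg D_le1 p_le_D Yc Xc]) (use L MM_ge L1 in auto)
    define na where "na = vnorm n a"
    define nb where "nb = vnorm n b"
    have na: "na > 0" unfolding na_def by (rule va.nrm_pos)
    have nb: "nb > 0" unfolding nb_def by (rule vb.nrm_pos)
    define E where "E = (1 / real L) * (1 / Yb h - 1) * Xb h"
    have "\<bar>wmh_estimate m L (wmh_sketch n L a h) (wmh_sketch n L b h) - vinner n a b\<bar>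
        = \<bar>(na * nb) * E - (na * nb) * p\<bar>"
      by (simp only: est vinner_eq E_def na_def nb_def)
    also have "\<dots> = (na * nb) * \<bar>E - p\<bar>"
      using na nb by (metis abs_mult abs_of_pos mult_pos_pos right_diff_distrib)
    finally have "\<bar>wmh_estimate m L (wmh_sketch n L a h) (wmh_sketch n L b h) - vinner n a b\<bar>
        = (na * nb) * \<bar>(1 / real L) * (1 / Yb h - 1) * Xb h - p\<bar>" unfolding E_def .
    also have "\<dots> \<le> (na * nb) * (\<epsilon> * D)" using fa na nb by (intro mult_left_mono) auto
    also have "\<dots> = \<epsilon> * max (restr_norm Iset a * nb) (na * restr_norm Iset b)"
      unfolding restr_a restr_b na_def[symmetric] nb_def[symmetric] D_def
      using na nb e by (simp add: max_mult_distrib_left max_mult_distrib_right mult_ac)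
    finally show ?thesis unfolding Iset_def na_def nb_def .
  qed
  show ?thesis unfolding hsP using Asets prob pt by blast
qed

end

theorem lemma2:
  shows "\<exists>C::real. \<forall>(n::nat) (L::nat) (\<epsilon>::real) (m::nat) (a::nat \<Rightarrow> real) (b::nat \<Rightarrow> real).
    L > 0 \<and> 0 < \<epsilon> \<and> \<epsilon> < 1 \<and>
    (\<exists>i<n. a i \<noteq> 0) \<and> (\<exists>i<n. b i \<noteq> 0) \<and>
    (\<forall>i<n. \<exists>k::nat. (a i)^2 / (vnorm n a)^2 = real k / real L) \<and>
    (\<forall>i<n. \<exists>k::nat. (b i)^2 / (vnorm n b)^2 = real k / real L) \<and>
    real m \<ge> C / \<epsilon>^2
    \<longrightarrow> (\<exists>A \<in> sets (hash_space m n L).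
          measure (hash_space m n L) A \<ge> 2/3 \<and>
          (\<forall>h\<in>A. \<bar>wmh_estimate m L (wmh_sketch n L a h) (wmh_sketch n L b h) - vinner n a b\<bar>
             \<le> \<epsilon> * max (restr_norm {i. i < n \<and> a i \<noteq> 0 \<and> b i \<noteq> 0} a * vnorm n b)
                         (vnorm n a * restr_norm {i. i < n \<and> a i \<noteq> 0 \<and> b i \<noteq> 0} b)))"
proof (rule exI[of _ 6144], intro allI impI)
  fix n L :: nat and \<epsilon> :: real and m :: nat and a b :: "nat \<Rightarrow> real"
  assume H: "L > 0 \<and> 0 < \<epsilon> \<and> \<epsilon> < 1 \<and>
    (\<exists>i<n. a i \<noteq> 0) \<and> (\<exists>i<n. b i \<noteq> 0) \<and>
    (\<forall>i<n. \<exists>k::nat. (a i)^2 / (vnorm n a)^2 = real k / real L) \<and>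
    (\<forall>i<n. \<exists>k::nat. (b i)^2 / (vnorm n b)^2 = real k / real L) \<and>
    real m \<ge> 6144 / \<epsilon>^2"
  interpret full n L a b m \<epsilon>
    by unfold_locales (use H in auto)
  show "\<exists>A \<in> sets (hash_space m n L).
          measure (hash_space m n L) A \<ge> 2/3 \<and>
          (\<forall>h\<in>A. \<bar>wmh_estimate m L (wmh_sketch n L a h) (wmh_sketch n L b h) - vinner n a b\<bar>
             \<le> \<epsilon> * max (restr_norm {i. i < n \<and> a i \<noteq> 0 \<and> b i \<noteq> 0} a * vnorm n b)
                         (vnorm n a * restr_norm {i. i < n \<and> a i \<noteq> 0 \<and> b i \<noteq> 0} b))"
    by (rule main)
qed

end
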